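(* There is an absolute constant $c_0>0$ such that if $\kappa\le c_0$, $B\sqrt\Gamma\le c_0\kappa$, and $s\Delta>4\pi$ with $\Delta=12B\Gamma/\kappa$, then $$\mathcal B_{\rm SW}\subseteq\bigcup_{i=1}^s\Bigl(\mathcal B_0^{(i)}\cup\bigcup_{\alpha=1}^3\bigcup_{j=1}^B\mathcal B^{(i)}_{\alpha,j}\Bigr).$$
   Context: Angles $\theta_{\boldsymbol r}$ with $\boldsymbol S_{\boldsymbol r}=(\cos\theta_{\boldsymbol r},\sin\theta_{\boldsymbol r})$, $S^{(\alpha)}_{\boldsymbol r}=\cos(\theta_{\boldsymbol r}-\phi_\alpha)$ with $\phi_1=0,\phi_2=\tfrac{2\pi}3,\phi_3=-\tfrac{2\pi}3$ (directions of $\hat{\mathrm a},\hat{\mathrm b},\hat{\mathrm c}$). $\Lambda_B=\{0,\dots,B\}^3$. The block is good if (a) $|S^{(\alpha)}_{\boldsymbol r}-S^{(\alpha)}_{\boldsymbol r+\hat{\mathrm e}_\alpha}|<\Gamma$ for all nearest-neighbour pairs in $\Lambda_B$ and (b) for some $\tau\in\{1,\dots,6\}$, $|\theta_{\boldsymbol r}-\tfrac\pi3\tau|<2\kappa$ (mod $2\pi$) for all $\boldsymbol r\in\Lambda_B$; $\mathcal B$ is the complement (bad). $\mathcal B_{\rm E}$ is the event that $|S^{(\alpha)}_{\boldsymbol r}-S^{(\alpha)}_{\boldsymbol r+\hat{\mathrm e}_\alpha}|\ge\Gamma$ for some pair in $\Lambda_B$, and $\mathcal B_{\rm SW}=\mathcal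 B\setminus\mathcal B_{\rm E}$. Let $\theta^\star_1,\dots,\theta^\star_s$ be $s$ uniformly spaced points on the circle. $\mathcal B^{(i)}_0$ is the event that the block is bad and $|\theta_{\boldsymbol r}-\theta_i^\star|<\Delta$ for all $\boldsymbol r\in\Lambda_B$. For $\alpha\in\{1,2,3\}$ and $j\in\{1,\dots,B\}$, let $\mathbb H_j$ be the set of sites whose $\alpha$-th coordinate equals $j$, and $\tilde\theta_i^\star=2\phi_\alpha-\theta_i^\star$. If the angle between $\theta^\star_i$ and $\phi_\alpha$ lies in $(-\kappa,\kappa)$ or $(\pi-\kappa,\pi+\kappa)$ (mod $2\pi$), $\mathcal B^{(i)}_{\alpha,j}=\emptyset$; otherwise $\mathcal B^{(i)}_{\alpha,j}$ is the set of configurations in $\mathcal B_{\rm SW}$ with $|\theta_{\boldsymbol r}-\theta^\star_i|<\Delta$ for all $\boldsymbol r\in\Lambda_B\cap\mathbb H_{j-1}$ and $|\theta_{\boldsymbol r}-\tilde\theta^\star_i|<\Delta$ for all $\boldsymbol r\in\Lambda_B\cap\mathbb H_j$. *)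

theory Defs
  imports Complex_Main
begin

type_synonym site = "nat \<times> nat \<times> nat"
type_synonym config = "site \<Rightarrow> real"

text \<open>Lattice directions a, b, c = unit vectors e_1, e_2, e_3; alpha in {1,2,3}.\<close>
fun coord :: "nat \<Rightarrow> site \<Rightarrow> nat" where
  "coord a (x, y, z) = (if a = 1 then x else if a = 2 then y else z)"

fun shift :: "nat \<Rightarrow> site \<Rightarrow> site" where
  "shift a (x, y, z) = (if a = 1 then (x + 1, y, z) else if a = 2 then (x, y + 1, z) else (x, y, z + 1))"

definition phi :: "nat \<Rightarrow> real" where
  "phi a = (if a = 1 then 0 else if a = 2 then 2 * pi / 3 else - 2 * pi / 3)"

definition Scomp :: "nat \<Rightarrow> config \<Rightarrow> site \<Rightarrow> real" where
  "Scomp a \<theta> r = cos (\<theta> r - phi a)"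

definition Lambda :: "nat \<Rightarrow> site set" where
  "Lambda B = {0..B} \<times> {0..B} \<times> {0..B}"

definition near_mod :: "real \<Rightarrow> real \<Rightarrow> real \<Rightarrow> bool" where
  "near_mod x y d \<longleftrightarrow> (\<exists>k::int. \<bar>x - y + 2 * pi * of_int k\<bar> < d)"

definition good_edges :: "nat \<Rightarrow> real \<Rightarrow> config \<Rightarrow> bool" where
  "good_edges B \<Gamma> \<theta> \<longleftrightarrow> (\<forall>a\<in>{1,2,3}. \<forall>r. r \<in> Lambda B \<longrightarrow> shift a r \<in> Lambda B \<longrightarrow>
      \<bar>Scomp a \<theta> r - Scomp a \<theta> (shift a r)\<bar> < \<Gamma>)"

definition good_block :: "nat \<Rightarrow> real \<Rightarrow> real \<Rightarrow> config \<Rightarrow> bool" where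
  "good_block B \<Gamma> \<kappa> \<theta> \<longleftrightarrow> good_edges B \<Gamma> \<theta> \<and>
     (\<exists>\<tau>\<in>{1..6::nat}. \<forall>r\<in>Lambda B. near_mod (\<theta> r) (pi / 3 * real \<tau>) (2 * \<kappa>))"

definition Bad :: "nat \<Rightarrow> real \<Rightarrow> real \<Rightarrow> config set" where
  "Bad B \<Gamma> \<kappa> = {\<theta>. \<not> good_block B \<Gamma> \<kappa> \<theta>}"

definition Bad_E :: "nat \<Rightarrow> real \<Rightarrow> config set" where
  "Bad_E B \<Gamma> = {\<theta>. \<not> good_edges B \<Gamma> \<theta>}"

definition Bad_SW :: "nat \<Rightarrow> real \<Rightarrow> real \<Rightarrow> config set" where
  "Bad_SW B \<Gamma> \<kappa> = Bad B \<Gamma> \<kappa> - Bad_E B \<Gamma>"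

definition theta_star :: "real \<Rightarrow> nat \<Rightarrow> nat \<Rightarrow> real" where
  "theta_star t0 s i = t0 + 2 * pi * real i / real s"

definition Bad0 :: "nat \<Rightarrow> real \<Rightarrow> real \<Rightarrow> real \<Rightarrow> real \<Rightarrow> config set" where
  "Bad0 B \<Gamma> \<kappa> \<Delta> ts = {\<theta>\<in>Bad B \<Gamma> \<kappa>. \<forall>r\<in>Lambda B. near_mod (\<theta> r) ts \<Delta>}"

definition hyperplane :: "nat \<Rightarrow> nat \<Rightarrow> site set" where
  "hyperplane a j = {r. coord a r = j}"

definition Bad_aj :: "nat \<Rightarrow> real \<Rightarrow> real \<Rightarrow> real \<Rightarrow> real \<Rightarrow> nat \<Rightarrow> nat \<Rightarrow> config set" where
  "Bad_aj B \<Gamma> \<kappa> \<Delta> ts a j =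
    (if near_mod ts (phi a) \<kappa> \<or> near_mod ts (phi a + pi) \<kappa> then {}
     else {\<theta>\<in>Bad_SW B \<Gamma> \<kappa>.
            (\<forall>r\<in>Lambda B \<inter> hyperplane a (j - 1). near_mod (\<theta> r) ts \<Delta>) \<and>
            (\<forall>r\<in>Lambda B \<inter> hyperplane a j. near_mod (\<theta> r) (2 * phi a - ts) \<Delta>)})"

end

theory Submission
  imports Defs
begin

definition rho :: complex where "rho = Complex (-1/2) (sqrt 3/2)"
definition rho2 :: complex where "rho2 = Complex (-1/2) (- sqrt 3/2)"

lemma s3: "sqrt 3 * sqrt 3 = (3::real)" by simp

lemma rho_mult[simp]: "rho * rho = rho2" "rho * rho2 = 1" "rho2 * rho = 1" "rho2 * rho2 = rho"
  "rho * (rho * x) = rho2 * x" "rho * (rho2 * x) = x" "rho2 * (rho * x) = x" "rho2 * (rho2 * x) = rho * x"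
proof -
  show 1: "rho * rho = rho2" "rho * rho2 = 1" "rho2 * rho = 1" "rho2 * rho2 = rho"
    by (simp_all add: rho_def rho2_def complex_eq_iff)
  show "rho * (rho * x) = rho2 * x" "rho * (rho2 * x) = x" "rho2 * (rho * x) = x" "rho2 * (rho2 * x) = rho * x"
    by (simp_all only: mult.assoc[symmetric] 1 mult_1_left)
qed

lemma rho_cnj[simp]: "cnj rho = rho2" "cnj rho2 = rho"
  by (simp_all add: rho_def rho2_def complex_eq_iff)

lemma rho_norm[simp]: "cmod rho = 1" "cmod rho2 = 1"
  by (simp_all add: rho_def rho2_def cmod_def power2_eq_square s3)

lemma cis_4pi3: "cis (4*pi/3) = rho2"
proof -
  have e: "cis (pi/3 + pi) = - cis (pi/3)" using cis_mult[of "pi/3" pi] by simp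
  have "pi/3 + pi = 4*pi/3" by simp
  then have "cis (4*pi/3) = - cis (pi/3)" using e by simp
  then show ?thesis by (simp add: complex_eq_iff rho2_def cos_60 sin_60)
qed



lemma cis_shift: "cis (a + 2*pi*of_int k) = cis a"
proof -
  have "cis (a + 2*pi*of_int k) = cis a * cis (2*pi*of_int k)" by (rule cis_mult[symmetric])
  also have "cis (2*pi*of_int k) = 1" by (rule cis_multiple_2pi) simp
  finally show ?thesis by simp
qed

lemma chord_eq: "cmod (cis a - cis b) = 2 * \<bar>sin ((a-b)/2)\<bar>"
proof -
  have "(cmod (cis a - cis b))^2 = (cos a - cos b)^2 + (sin a - sin b)^2"
    by (simp add: cmod_power2)
  also have "\<dots> = (cos a^2 + sin a^2) + (cos b^2 + sin b^2) - 2*(cos a * cos b + sin a * sin b)"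
    by (simp add: power2_eq_square algebra_simps)
  also have "\<dots> = 2 - 2 * cos (a - b)" by (simp add: cos_diff)
  also have "cos (a-b) = 1 - 2 * sin ((a-b)/2)^2"
  proof -
    have "cos (2 * ((a-b)/2)) = 1 - 2 * sin ((a-b)/2)^2" by (rule cos_double_sin)
    moreover have "2 * ((a-b)/2) = a - b" by simp
    ultimately show ?thesis by metis
  qed
  finally have "(cmod (cis a - cis b))^2 = (2 * \<bar>sin ((a-b)/2)\<bar>)^2"
    by (simp add: power2_eq_square)
  then show ?thesis
    by (rule power2_eq_imp_eq) simp_all
qed

lemma chord_le: "cmod (cis a - cis b) \<le> \<bar>a - b\<bar>"
  using abs_sin_x_le_abs_x[of "(a-b)/2"] by (simp add: chord_eq)

lemma near_mod_chord: "near_mod x y d \<Longrightarrow> cmod (cis x - cis y) < d"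
proof -
  assume "near_mod x y d"
  then obtain k :: int where k: "\<bar>x - y + 2*pi*of_int k\<bar> < d" unfolding near_mod_def by blast
  have "cis y = cis (y - 2*pi*of_int k)" using cis_shift[of "y - 2*pi*of_int k" k] by simp
  then have "cmod (cis x - cis y) \<le> \<bar>x - (y - 2*pi*of_int k)\<bar>" using chord_le by metis
  with k show ?thesis by (simp add: algebra_simps)
qed

lemma near_mod_suff:
  assumes d: "0 < d" "d \<le> pi" and c: "cmod (cis x - cis y) < 2 * sin (d/2)"
  shows "near_mod x y d"
proof -
  define k :: int where "k = - \<lfloor>(x - y + pi) / (2*pi)\<rfloor>"
  define t where "t = x - y + 2*pi*of_int k"
  have f1: "of_int \<lfloor>(x - y + pi) / (2*pi)\<rfloor> \<le> (x - y + pi) / (2*pi)" by (rule of_int_floor_le)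
  have f2: "(x - y + pi) / (2*pi) < of_int \<lfloor>(x - y + pi) / (2*pi)\<rfloor> + 1" by (rule real_of_int_floor_add_one_gt)
  define F where "F = real_of_int \<lfloor>(x - y + pi) / (2*pi)\<rfloor>"
  have xr: "x - y + pi = 2*pi*((x - y + pi) / (2*pi))" by simp
  have "2*pi*F \<le> 2*pi*((x - y + pi) / (2*pi))" using f1 unfolding F_def by (intro mult_left_mono) auto
  then have "2*pi*F \<le> x - y + pi" using xr by linarith
  moreover have "2*pi*((x - y + pi) / (2*pi)) < 2*pi*(F+1)" using f2 unfolding F_def by (intro mult_strict_left_mono) auto
  then have "x - y + pi < 2*pi*(F+1)" using xr by linarith
  moreover have "t = x - y - 2*pi*F" unfolding t_def k_def F_def by simp
  ultimately have tl: "-pi \<le> t" and tu: "t < pi" by (simp_all add: algebra_simps)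
  have "cis y = cis (y - 2*pi*of_int k)" using cis_shift[of "y - 2*pi*of_int k" k] by simp
  then have ch: "cmod (cis x - cis y) = 2 * \<bar>sin (t/2)\<bar>" unfolding t_def by (simp add: chord_eq algebra_simps)
  have "\<bar>t\<bar> < d"
  proof (rule ccontr)
    assume "\<not> \<bar>t\<bar> < d"
    then have "d/2 \<le> \<bar>t\<bar>/2" by simp
    moreover have "\<bar>t\<bar>/2 \<le> pi/2" using tl tu by simp
    ultimately have "sin (d/2) \<le> sin (\<bar>t\<bar>/2)" using d by (intro sin_monotone_2pi_le) auto
    moreover have "sin (\<bar>t\<bar>/2) = \<bar>sin (t/2)\<bar>"
    proof (cases "t \<ge> 0")
      case True
      then show ?thesis using tu by (simp add: sin_ge_zero)
    next
      case False
      then have "sin (-t/2) \<ge> 0" using tl by (intro sin_ge_zero) auto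
      then show ?thesis using False by simp
    qed
    ultimately show False using c ch by simp
  qed
  then show ?thesis unfolding near_mod_def t_def by blast
qed

lemma sin_lower: assumes "0 \<le> (x::real)" shows "x - x^3/6 \<le> sin x"
proof -
  have "(\<Sum>m<3. sin_coeff m * x ^ m) = x"
    by (simp add: eval_nat_numeral sin_coeff_def)
  with Maclaurin_sin_bound[of x 3] have "\<bar>sin x - x\<bar> \<le> inverse (fact 3) * \<bar>x\<bar> ^ 3" by simp
  moreover have "inverse (fact 3) * \<bar>x\<bar> ^ 3 = x^3/6" using assms by (simp add: eval_nat_numeral)
  ultimately have h: "\<bar>sin x - x\<bar> \<le> x^3/6" by simp
  show ?thesis using abs_le_D2[OF h] by linarith
qed

lemma grid:
  assumes "1 \<le> s"
  shows "\<exists>i\<in>{1..s}. cmod (cis x - cis (theta_star t0 s i)) \<le> pi / real s"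
proof -
  define u where "u = (x - t0) * real s / (2*pi)"
  define n where "n = round u"
  have un: "\<bar>u - of_int n\<bar> \<le> 1/2" unfolding n_def
    using of_int_round_ge[of u] of_int_round_le[of u] by linarith
  define q where "q = n div int s"
  define i0 where "i0 = n mod int s"
  have sp: "int s > 0" using assms by simp
  have i0r: "0 \<le> i0" "i0 < int s" unfolding i0_def using sp by auto
  have nq: "n = int s * q + i0" unfolding q_def i0_def by simp
  define i where "i = (if i0 = 0 then s else nat i0)"
  have iin: "i \<in> {1..s}" unfolding i_def using i0r assms by auto
  have "cis (theta_star t0 s i) = cis (t0 + 2*pi*of_int n / real s)"
  proof (cases "i0 = 0")
    case True
    then have "t0 + 2*pi*of_int n / real s = t0 + 2*pi*of_int q" using nq sp by (simp add: field_simps)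
    moreover have "theta_star t0 s i = t0 + 2*pi*of_int 1" using True sp unfolding i_def theta_star_def by simp
    ultimately show ?thesis using cis_shift by metis
  next
    case False
    then have "theta_star t0 s i = t0 + 2*pi*of_int i0 / real s" unfolding i_def theta_star_def using i0r by simp
    moreover have "t0 + 2*pi*of_int n / real s = (t0 + 2*pi*of_int i0 / real s) + 2*pi*of_int q"
      using nq sp by (simp add: field_simps)
    ultimately show ?thesis using cis_shift by metis
  qed
  moreover have "\<bar>x - (t0 + 2*pi*of_int n / real s)\<bar> = 2*pi*\<bar>u - of_int n\<bar> / real s"
  proof -
    have "x - (t0 + 2*pi*of_int n / real s) = 2*pi*(u - of_int n) / real s"
      unfolding u_def using sp by (simp add: field_simps)
    then show ?thesis by (simp add: abs_mult)
  qed
  moreover have "2*pi*\<bar>u - of_int n\<bar> / real s \<le> pi / real s"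
    using un sp by (simp add: divide_right_mono)
  ultimately show ?thesis using iin chord_le by (metis order_trans)
qed



definition Rf :: "nat \<Rightarrow> complex \<Rightarrow> complex" where
  "Rf a x = cis (2 * phi a) * cnj x"

lemma cis_2pi3: "cis (2*pi/3) = rho"
  by (simp add: complex_eq_iff rho_def cos_120 sin_120)

lemma cis_pi3: "cis (pi/3) = - rho2"
  by (simp add: complex_eq_iff rho2_def cos_60 sin_60)

lemma Rf_simps: "Rf 1 x = cnj x" "Rf (Suc 0) x = cnj x" "Rf 2 x = rho2 * cnj x" "Rf 3 x = rho * cnj x"
proof -
  show "Rf 1 x = cnj x" by (simp add: Rf_def phi_def)
  then show "Rf (Suc 0) x = cnj x" by simp
  have "2 * phi 2 = 4*pi/3" by (simp add: phi_def)
  then show "Rf 2 x = rho2 * cnj x" unfolding Rf_def using cis_4pi3 by metis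
  have "2 * phi 3 = - (4*pi/3)" by (simp add: phi_def)
  then have "cis (2 * phi 3) = cnj (cis (4*pi/3))" by (simp add: cis_cnj)
  then show "Rf 3 x = rho * cnj x" by (simp add: Rf_def cis_4pi3)
qed

lemma cis_phi: "cis (phi 1) = 1" "cis (phi (Suc 0)) = 1" "cis (phi 2) = rho" "cis (phi 3) = rho2"
proof -
  show "cis (phi 1) = 1" by (simp add: phi_def)
  then show "cis (phi (Suc 0)) = 1" by simp
  show "cis (phi 2) = rho" by (simp add: phi_def cis_2pi3)
  have "phi 3 = - (2*pi/3)" by (simp add: phi_def)
  then have "cis (phi 3) = cnj (cis (2*pi/3))" by (simp add: cis_cnj)
  then show "cis (phi 3) = rho2" by (simp add: cis_2pi3)
qed

lemma cis_plus_pi: "cis (x + pi) = - cis x"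
  using cis_mult[of x pi] by simp

lemma rho_ne[simp]: "rho \<noteq> 1" "rho2 \<noteq> 1" "rho \<noteq> rho2" "rho2 \<noteq> rho" "rho \<noteq> 0" "rho2 \<noteq> 0"
  by (simp_all add: rho_def rho2_def complex_eq_iff)

lemma Rf_inv: "a \<in> {1,2,3} \<Longrightarrow> Rf a (Rf a x) = x"
  by (auto simp: Rf_simps)

lemma Rf_dist: "cmod (Rf a x - Rf a y) = cmod (x - y)"
proof -
  have "Rf a x - Rf a y = cis (2 * phi a) * (cnj x - cnj y)" by (simp add: Rf_def algebra_simps)
  also have "\<dots> = cis (2 * phi a) * cnj (x - y)" by simp
  finally show ?thesis by (simp add: norm_mult del: complex_cnj_diff)
qed

lemma Rf_cis: "Rf a (cis t) = cis (2 * phi a - t)"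
  by (simp add: Rf_def cis_cnj cis_mult)

lemma Rf_neg: "Rf a (- x) = - Rf a x"
  by (simp add: Rf_def)

lemma Rf_nz: "x \<noteq> 0 \<Longrightarrow> Rf a x \<noteq> 0"
  by (simp add: Rf_def)

lemma Rf_comm:
  assumes "a \<in> {1,2,3}" "b \<in> {1,2,3}" "a \<noteq> b" "x \<noteq> 0"
  shows "Rf a (Rf b x) \<noteq> x" "Rf a (Rf b x) \<noteq> Rf b (Rf a x)"
  using assms by (auto simp: Rf_simps)

lemma Rf_fix: "Rf a (cis (phi a)) = cis (phi a)"
  by (simp add: Rf_cis)

lemma unit_cnj: "cmod x = 1 \<Longrightarrow> x * cnj x = 1"
  using complex_norm_square[of x] by simp

lemma Rf_prod:
  assumes x: "cmod x = 1"
  shows "cmod (x - Rf a x) = cmod (x - cis (phi a)) * cmod (x + cis (phi a))"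
proof -
  define m where "m = cis (phi a)"
  have R: "Rf a x = m * m * cnj x" unfolding Rf_def m_def by (simp add: cis_mult)
  have "(x - m) * (x + m) = x * x - m * m" by (simp add: algebra_simps)
  also have "\<dots> = x * (x - m * m * cnj x)"
    using unit_cnj[OF x] by (simp add: algebra_simps)
  finally have "cmod ((x - m) * (x + m)) = cmod x * cmod (x - m * m * cnj x)" by (simp add: norm_mult)
  then show ?thesis using x R unfolding m_def[symmetric] by (simp add: norm_mult)
qed

lemma parallelogram:
  assumes "cmod x = 1" "cmod m = 1"
  shows "(cmod (x - m))^2 + (cmod (x + m))^2 = 4"
proof -
  have "(Re x)^2 + (Im x)^2 = 1" "(Re m)^2 + (Im m)^2 = 1"
    using assms by (simp_all add: cmod_power2[symmetric])
  moreover have "(cmod (x - m))^2 = (Re x - Re m)^2 + (Im x - Im m)^2" by (simp add: cmod_power2)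
  moreover have "(cmod (x + m))^2 = (Re x + Re m)^2 + (Im x + Im m)^2" by (simp add: cmod_power2)
  ultimately show ?thesis by (simp add: power2_eq_square algebra_simps)
qed

lemma prod_bound:
  fixes a b e :: real
  assumes "e \<le> a" "e \<le> b" "0 \<le> e" "a^2 + b^2 = 4"
  shows "7/5 * e \<le> a * b"
proof -
  have "7/5 \<le> a \<or> 7/5 \<le> b"
  proof (rule ccontr)
    assume "\<not> ?thesis"
    then have "a < 7/5" "b < 7/5" by auto
    then have "a^2 < (7/5)^2" "b^2 < (7/5)^2" using assms by (auto intro!: power_strict_mono)
    moreover have "(7/5::real)^2 = 49/25" by (simp add: power2_eq_square)
    ultimately show False using assms by linarith
  qed
  then show ?thesis
  proof
    assume "7/5 \<le> a"
    then have "e * (7/5) \<le> b * a" using assms by (intro mult_mono) auto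
    then show ?thesis by (simp add: mult.commute)
  next
    assume "7/5 \<le> b"
    then have "e * (7/5) \<le> a * b" using assms by (intro mult_mono) auto
    then show ?thesis by (simp add: mult.commute)
  qed
qed

lemma edge_id:
  "cmod (cis u - cis v) * cmod (cis v - cis (2*p - u)) = 2 * \<bar>cos (u - p) - cos (v - p)\<bar>"
proof -
  have e1: "((u-p) + (v-p))/2 = (v - (2*p - u))/2" by (simp add: field_simps)
  have e2: "((v-p) - (u-p))/2 = - ((u - v)/2)" by (simp add: field_simps)
  have "cos (u - p) - cos (v - p) = 2 * sin ((v - (2*p - u))/2) * sin (- ((u - v)/2))"
    using cos_diff_cos[of "u-p" "v-p"] unfolding e1 e2 .
  then have "\<bar>cos (u - p) - cos (v - p)\<bar> = 2 * \<bar>sin ((u - v)/2)\<bar> * \<bar>sin ((v - (2*p - u))/2)\<bar>"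
    by (simp add: abs_mult)
  then show ?thesis by (simp add: chord_eq)
qed

definition Mset :: "complex set" where "Mset = {1, -1, rho, -rho, rho2, -rho2}"

lemma M_closed: "m \<in> Mset \<Longrightarrow> rho * m \<in> Mset" "m \<in> Mset \<Longrightarrow> rho2 * m \<in> Mset"
  "m \<in> Mset \<Longrightarrow> a \<in> {1,2,3} \<Longrightarrow> Rf a m \<in> Mset"
  by (auto simp: Mset_def Rf_simps)

lemma cmod_ge1: "1 \<le> (Re z)^2 + (Im z)^2 \<Longrightarrow> 1 \<le> cmod z"
  by (simp add: cmod_def)

lemma M_sep: "m \<in> Mset \<Longrightarrow> m' \<in> Mset \<Longrightarrow> m \<noteq> m' \<Longrightarrow> 1 \<le> cmod (m - m')"
  unfolding Mset_def
  by (auto intro!: cmod_ge1 simp: rho_def rho2_def power2_eq_square)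

lemma cis_period: "cis (x - 2*pi) = cis x"
  using cis_shift[of x "-1"] by simp

lemma M_cis: "m \<in> Mset \<Longrightarrow> \<exists>\<tau>\<in>{1..6::nat}. m = cis (pi/3 * real \<tau>)"
proof -
  assume m: "m \<in> Mset"
  have c1: "cis (pi/3 * real (1::nat)) = - rho2" using cis_pi3 by simp
  have c2: "cis (pi/3 * real (2::nat)) = rho" using cis_2pi3 by (simp add: field_simps)
  have c3: "cis (pi/3 * real (3::nat)) = -1" by simp
  have c4: "cis (pi/3 * real (4::nat)) = rho2" using cis_4pi3 by (simp add: field_simps)
  have "cis (pi/3 * real (5::nat)) = cis (pi/3 * real (5::nat) - 2*pi)" by (rule cis_period[symmetric])
  also have "pi/3 * real (5::nat) - 2*pi = - (pi/3)" by simp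
  finally have c5: "cis (pi/3 * real (5::nat)) = - rho" using cis_pi3 by (simp add: cis_cnj[symmetric])
  have "cis (pi/3 * real (6::nat)) = cis (pi/3 * real (6::nat) - 2*pi)" by (rule cis_period[symmetric])
  then have c6: "cis (pi/3 * real (6::nat)) = 1" by simp
  have d: "m = 1 \<or> m = -1 \<or> m = rho \<or> m = -rho \<or> m = rho2 \<or> m = -rho2" using m by (simp add: Mset_def)
  have "m = -rho2 \<longrightarrow> ?thesis" using c1 by (auto intro!: bexI[where x="1::nat"])
  moreover have "m = rho \<longrightarrow> ?thesis" using c2 by (auto intro!: bexI[where x="2::nat"])
  moreover have "m = -1 \<longrightarrow> ?thesis" using c3 by (auto intro!: bexI[where x="3::nat"])
  moreover have "m = rho2 \<longrightarrow> ?thesis" using c4 by (auto intro!: bexI[where x="4::nat"])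
  moreover have "m = -rho \<longrightarrow> ?thesis" using c5 by (auto intro!: bexI[where x="5::nat"])
  moreover have "m = 1 \<longrightarrow> ?thesis" using c6 by (auto intro!: bexI[where x="6::nat"])
  ultimately show ?thesis using d by blast
qed

lemma phi_M: "a \<in> {1,2,3} \<Longrightarrow> cis (phi a) \<in> Mset" "a \<in> {1,2,3} \<Longrightarrow> - cis (phi a) \<in> Mset"
  by (auto simp: Mset_def cis_phi)

definition Orb :: "complex \<Rightarrow> complex set" where
  "Orb w = {w, rho*w, rho2*w, cnj w, rho2 * cnj w, rho * cnj w}"

lemma Orb_closed: "p \<in> Orb w \<Longrightarrow> a \<in> {1,2,3} \<Longrightarrow> Rf a p \<in> Orb w"
  by (auto simp: Orb_def Rf_simps)

lemma Orb_rel: "p \<in> Orb w \<Longrightarrow> q \<in> Orb w \<Longrightarrow> q \<in> {p, rho*p, rho2*p, Rf 1 p, Rf 2 p, Rf 3 p}"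
  by (auto simp: Orb_def Rf_simps)

lemma Orb_unit: "cmod w = 1 \<Longrightarrow> p \<in> Orb w \<Longrightarrow> cmod p = 1"
  by (auto simp: Orb_def norm_mult)

lemma Orb_M: "w \<in> Mset \<Longrightarrow> Orb w \<subseteq> Mset"
  using M_closed[of w] M_closed(3)[of w 1] M_closed(3)[of w 2] M_closed(3)[of w 3] by (auto simp: Orb_def Rf_simps)

lemma Orb_fin: "finite (Orb w)"
  by (auto simp: Orb_def)

lemma Orb_ne: "w \<in> Orb w"
  by (auto simp: Orb_def)

lemma rot_dist: "cmod p = 1 \<Longrightarrow> cmod (p - rho * p) = sqrt 3" "cmod p = 1 \<Longrightarrow> cmod (p - rho2 * p) = sqrt 3"
proof -
  have "cmod (1 - rho) = sqrt 3" "cmod (1 - rho2) = sqrt 3"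
    by (simp_all add: rho_def rho2_def cmod_def power2_eq_square)
  moreover have "p - rho * p = (1 - rho) * p" "p - rho2 * p = (1 - rho2) * p" by (simp_all add: algebra_simps)
  ultimately show "cmod p = 1 \<Longrightarrow> cmod (p - rho * p) = sqrt 3" "cmod p = 1 \<Longrightarrow> cmod (p - rho2 * p) = sqrt 3"
    by (simp_all add: norm_mult)
qed



fun setc :: "nat \<Rightarrow> nat \<Rightarrow> site \<Rightarrow> site" where
  "setc a k (x, y, z) = (if a = 1 then (k, y, z) else if a = 2 then (x, k, z) else (x, y, k))"

lemma shift_setc: "shift a (setc a n u) = setc a (Suc n) u"
  by (cases u) auto

lemma setc_coord: "setc a (coord a u) u = u"
  by (cases u) auto

lemma coord_setc: "coord a (setc a n u) = n"
  by (cases u) auto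

lemma coord_setc_other: "a \<in> {1,2,3} \<Longrightarrow> b \<in> {1,2,3} \<Longrightarrow> b \<noteq> a \<Longrightarrow> coord b (setc a n u) = coord b u"
  by (cases u) auto

lemma Lambda_iff: "r \<in> Lambda B \<longleftrightarrow> (coord 1 r \<le> B \<and> coord 2 r \<le> B \<and> coord 3 r \<le> B)"
  by (cases r) (auto simp: Lambda_def)

lemma coord_le: "u \<in> Lambda B \<Longrightarrow> coord a u \<le> B"
  by (cases u) (auto simp: Lambda_def)

lemma setc_Lambda: "u \<in> Lambda B \<Longrightarrow> n \<le> B \<Longrightarrow> setc a n u \<in> Lambda B"
  by (cases u) (auto simp: Lambda_def)

lemma coord_shift: "coord a (shift a r) = Suc (coord a r)"
  by (cases r) auto

lemma coord_shift_other: "a \<in> {1,2,3} \<Longrightarrow> b \<in> {1,2,3} \<Longrightarrow> b \<noteq> a \<Longrightarrow> coord b (shift a r) = coord b r"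
  by (cases r) auto

lemma shift_comm: "shift a (shift b r) = shift b (shift a r)"
  by (cases r) auto

lemma site_eq: "(\<And>d. d \<in> {1,2,3} \<Longrightarrow> coord d x = coord d (y::site)) \<Longrightarrow> x = y"
proof -
  assume h: "\<And>d. d \<in> {1,2,3} \<Longrightarrow> coord d x = coord d (y::site)"
  obtain x1 x2 x3 where x: "x = (x1,x2,x3)" by (cases x) auto
  obtain y1 y2 y3 where y: "y = (y1,y2,y3)" by (cases y) auto
  show ?thesis using h[of 1] h[of 2] h[of 3] x y by simp
qed

lemma shift_in: "r \<in> Lambda B \<Longrightarrow> a \<in> {1,2,3} \<Longrightarrow> shift a r \<in> Lambda B \<longleftrightarrow> coord a r < B"
  by (cases r) (auto simp: Lambda_def)

lemma shift_in2: "shift a r \<in> Lambda B \<Longrightarrow> r \<in> Lambda B"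
  by (cases r) (auto simp: Lambda_def split: if_splits)

lemma line:
  fixes g :: "site \<Rightarrow> real"
  assumes d: "0 \<le> \<delta>"
  and step: "\<And>r. r \<in> Lambda B \<Longrightarrow> shift a r \<in> Lambda B \<Longrightarrow> Q r \<Longrightarrow> \<bar>g (shift a r) - g r\<bar> \<le> \<delta>"
  and Qinv: "\<And>n. Q (setc a n u) = Q u"
  and u: "u \<in> Lambda B" "Q u" and k: "k \<le> B"
  shows "\<bar>g (setc a k u) - g u\<bar> \<le> real B * \<delta>"
proof -
  have main: "m \<le> n \<Longrightarrow> n \<le> B \<Longrightarrow> \<bar>g (setc a n u) - g (setc a m u)\<bar> \<le> real (n - m) * \<delta>" for m n
  proof (induction n)
    case 0 then show ?case by simp
  next
    case (Suc n)
    show ?case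
    proof (cases "m = Suc n")
      case True then show ?thesis by simp
    next
      case False
      then have mn: "m \<le> n" "n \<le> B" using Suc.prems by auto
      then have ih: "\<bar>g (setc a n u) - g (setc a m u)\<bar> \<le> real (n - m) * \<delta>" using Suc.IH by simp
      have "\<bar>g (shift a (setc a n u)) - g (setc a n u)\<bar> \<le> \<delta>"
        apply (rule step)
        using u Suc.prems Qinv mn by (auto simp: shift_setc intro: setc_Lambda)
      then have st: "\<bar>g (setc a (Suc n) u) - g (setc a n u)\<bar> \<le> \<delta>" by (simp add: shift_setc)
      have "real (Suc n - m) = real (n - m) + 1" using mn by (simp add: Suc_diff_le)
      then show ?thesis using ih st by (simp add: algebra_simps)
    qed
  qed
  define c where "c = coord a u"
  have cB: "c \<le> B" unfolding c_def using coord_le u by blast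
  have uc: "setc a c u = u" unfolding c_def by (rule setc_coord)
  show ?thesis
  proof (cases "c \<le> k")
    case True
    then have "\<bar>g (setc a k u) - g (setc a c u)\<bar> \<le> real (k - c) * \<delta>" using main k by blast
    moreover have "real (k - c) * \<delta> \<le> real B * \<delta>" using d k by (intro mult_right_mono) auto
    ultimately show ?thesis using uc by simp
  next
    case False
    then have "\<bar>g (setc a c u) - g (setc a k u)\<bar> \<le> real (c - k) * \<delta>" using main cB by simp
    moreover have "real (c - k) * \<delta> \<le> real B * \<delta>" using d cB by (intro mult_right_mono) auto
    ultimately show ?thesis using uc by (simp add: abs_minus_commute)
  qed
qed

lemma others: "a \<in> {1,2,3::nat} \<Longrightarrow> \<exists>b c. b \<in> {1,2,3} \<and> c \<in> {1,2,3} \<and> b \<noteq> a \<and> c \<noteq> a \<and> b \<noteq> c"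
proof -
  assume "a \<in> {1,2,3::nat}"
  then consider "a = 1" | "a = 2" | "a = 3" by auto
  then show ?thesis
  proof cases
    case 1 then show ?thesis by (intro exI[of _ 2] exI[of _ 3]) auto
  next
    case 2 then show ?thesis by (intro exI[of _ 1] exI[of _ 3]) auto
  next
    case 3 then show ?thesis by (intro exI[of _ 1] exI[of _ 2]) auto
  qed
qed

lemma plane_drift:
  fixes g :: "site \<Rightarrow> real"
  assumes a: "a \<in> {1,2,3}" and d: "0 \<le> \<delta>"
  and step: "\<And>b r. b \<in> {1,2,3} \<Longrightarrow> b \<noteq> a \<Longrightarrow> r \<in> Lambda B \<Longrightarrow> shift b r \<in> Lambda B \<Longrightarrow> coord a r = coord a u \<Longrightarrow> \<bar>g (shift b r) - g r\<bar> \<le> \<delta>"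
  and u: "u \<in> Lambda B" and v: "v \<in> Lambda B" "coord a v = coord a u"
  shows "\<bar>g v - g u\<bar> \<le> 2 * real B * \<delta>"
proof -
  obtain b c where bc: "b \<in> {1,2,3}" "c \<in> {1,2,3}" "b \<noteq> a" "c \<noteq> a" "b \<noteq> c" using others[OF a] by blast
  define w where "w = setc b (coord b v) u"
  have wL: "w \<in> Lambda B" unfolding w_def using u v coord_le setc_Lambda by blast
  have wa: "coord a w = coord a u" unfolding w_def using coord_setc_other[of b a] bc a by auto
  have wb: "coord b w = coord b v" unfolding w_def by (rule coord_setc)
  have 1: "\<bar>g w - g u\<bar> \<le> real B * \<delta>"
    unfolding w_def
  proof (rule line[where Q="\<lambda>r. coord a r = coord a u"])
    show "0 \<le> \<delta>" by (rule d)
    show "\<And>r. r \<in> Lambda B \<Longrightarrow> shift b r \<in> Lambda B \<Longrightarrow> coord a r = coord a u \<Longrightarrow> \<bar>g (shift b r) - g r\<bar> \<le> \<delta>"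
      using step bc by blast
    show "\<And>n. (coord a (setc b n u) = coord a u) = (coord a u = coord a u)"
      using coord_setc_other[of b a] bc a by auto
    show "u \<in> Lambda B" by (rule u)
    show "coord a u = coord a u" by (rule refl)
    show "coord b v \<le> B" using coord_le v by blast
  qed
  have vw: "setc c (coord c v) w = v"
  proof (rule site_eq)
    fix e :: nat assume e: "e \<in> {1,2,3}"
    then have "e = a \<or> e = b \<or> e = c" using a bc by auto
    then show "coord e (setc c (coord c v) w) = coord e v"
    proof (elim disjE)
      assume "e = a"
      then show ?thesis using coord_setc_other[of c a] bc a wa v by simp
    next
      assume "e = b"
      then show ?thesis using coord_setc_other[of c b] bc wb by simp
    next
      assume "e = c"
      then show ?thesis by (simp add: coord_setc)
    qed
  qed
  have 2: "\<bar>g (setc c (coord c v) w) - g w\<bar> \<le> real B * \<delta>"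
  proof (rule line[where Q="\<lambda>r. coord a r = coord a u"])
    show "0 \<le> \<delta>" by (rule d)
    show "\<And>r. r \<in> Lambda B \<Longrightarrow> shift c r \<in> Lambda B \<Longrightarrow> coord a r = coord a u \<Longrightarrow> \<bar>g (shift c r) - g r\<bar> \<le> \<delta>"
      using step bc by blast
    show "\<And>n. (coord a (setc c n w) = coord a u) = (coord a w = coord a u)"
      using coord_setc_other[of c a] bc a by auto
    show "w \<in> Lambda B" by (rule wL)
    show "coord a w = coord a u" by (rule wa)
    show "coord c v \<le> B" using coord_le v by blast
  qed
  show ?thesis using 1 2 vw by simp
qed

lemma whole_drift:
  fixes g :: "site \<Rightarrow> real"
  assumes d: "0 \<le> \<delta>"
  and step: "\<And>b r. b \<in> {1,2,3} \<Longrightarrow> r \<in> Lambda B \<Longrightarrow> shift b r \<in> Lambda B \<Longrightarrow> \<bar>g (shift b r) - g r\<bar> \<le> \<delta>"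
  and u: "u \<in> Lambda B" and v: "v \<in> Lambda B"
  shows "\<bar>g v - g u\<bar> \<le> 3 * real B * \<delta>"
proof -
  define w where "w = setc 1 (coord 1 v) u"
  have wL: "w \<in> Lambda B" unfolding w_def using u v coord_le setc_Lambda by blast
  have 1: "\<bar>g w - g u\<bar> \<le> real B * \<delta>"
    unfolding w_def
    apply (rule line[where Q="\<lambda>r. True"])
    using d step u v coord_le by auto
  have 2: "\<bar>g v - g w\<bar> \<le> 2 * real B * \<delta>"
    apply (rule plane_drift[where a=1])
    using d step wL v by (auto simp: w_def coord_setc)
  show ?thesis using 1 2 by simp
qed

lemma plaq:
  assumes i: "\<And>x. R a (R a x) = x" "\<And>x. R b (R b x) = x"
  and n: "R a (R b A) \<noteq> A" "R b (R a A) \<noteq> A" "R a (R b A) \<noteq> R b (R a A)"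
  and e: "Bv = A \<or> Bv = R a A" "C = A \<or> C = R b A" "D = Bv \<or> D = R b Bv" "D = C \<or> D = R a C"
  shows "(Bv \<noteq> A \<longrightarrow> C = A \<and> D = Bv \<and> D \<noteq> C) \<and> (D \<noteq> C \<longrightarrow> Bv \<noteq> A)"
proof -
  have f1: "R a A \<noteq> R b A"
  proof
    assume "R a A = R b A"
    then have "R b (R a A) = R b (R b A)" by simp
    then show False using i(2) n(2) by simp
  qed
  have f2: "R a A = R a (R b A) \<Longrightarrow> R b A = A"
  proof -
    assume "R a A = R a (R b A)"
    then have "R a (R a A) = R a (R a (R b A))" by simp
    then show ?thesis using i(1) by simp
  qed
  have f3: "R b (R a A) = R b A \<Longrightarrow> R a A = A"
  proof -
    assume "R b (R a A) = R b A"
    then have "R b (R b (R a A)) = R b (R b A)" by simp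
    then show ?thesis using i(2) by simp
  qed
  show ?thesis
  proof (intro conjI impI)
    assume bv: "Bv \<noteq> A"
    then have bv': "Bv = R a A" using e(1) by blast
    show c: "C = A"
    proof (rule ccontr)
      assume "C \<noteq> A"
      then have c: "C = R b A" using e(2) by blast
      show False using e(3) e(4) unfolding bv' c using f1 f2 f3 n(3) bv bv' \<open>C \<noteq> A\<close> c by metis
    qed
    show "D = Bv" using e(3) e(4) unfolding bv' c using n(2) by metis
    then show "D \<noteq> C" using bv c by simp
  next
    assume dc: "D \<noteq> C"
    show "Bv \<noteq> A"
    proof
      assume bv: "Bv = A"
      have d: "D = R a C" using e(4) dc by blast
      show False using e(2) e(3) unfolding bv d using f1 n(1) n(2) dc d by metis
    qed
  qed
qed



lemma comb:
  fixes L :: "site \<Rightarrow> 'x" and R :: "nat \<Rightarrow> 'x \<Rightarrow> 'x"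
  assumes inv: "\<And>a x. a \<in> {1,2,3} \<Longrightarrow> R a (R a x) = x"
  and nf: "\<And>a b r. a \<in> {1,2,3} \<Longrightarrow> b \<in> {1,2,3} \<Longrightarrow> a \<noteq> b \<Longrightarrow> r \<in> Lambda B \<Longrightarrow>
             R a (R b (L r)) \<noteq> L r \<and> R a (R b (L r)) \<noteq> R b (R a (L r))"
  and edge: "\<And>a r. a \<in> {1,2,3} \<Longrightarrow> r \<in> Lambda B \<Longrightarrow> shift a r \<in> Lambda B \<Longrightarrow>
             L (shift a r) = L r \<or> L (shift a r) = R a (L r)"
  shows "(\<forall>r\<in>Lambda B. L r = L (0,0,0)) \<or>
    (\<exists>a\<in>{1,2,3}. \<exists>j\<in>{1..B}. \<exists>p. R a p \<noteq> p \<and> (\<forall>r\<in>Lambda B. coord a r = j - 1 \<longrightarrow> L r = p) \<and>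
        (\<forall>r\<in>Lambda B. coord a r = j \<longrightarrow> L r = R a p))"
proof (cases "\<exists>a\<in>{1,2,3}. \<exists>r. r \<in> Lambda B \<and> shift a r \<in> Lambda B \<and> L (shift a r) \<noteq> L r")
  case False
  define g where "g r = (if L r = L (0,0,0) then 0 else 1::real)" for r
  have z: "(0,0,0) \<in> Lambda B" by (simp add: Lambda_def)
  have "\<forall>v\<in>Lambda B. L v = L (0,0,0)"
  proof
    fix v assume v: "v \<in> Lambda B"
    have "\<bar>g v - g (0,0,0)\<bar> \<le> 3 * real B * 0"
    proof (rule whole_drift[OF order_refl _ z v])
      fix b r assume "b \<in> {1,2,3::nat}" "r \<in> Lambda B" "shift b r \<in> Lambda B"
      then have "L (shift b r) = L r" using False by blast
      then show "\<bar>g (shift b r) - g r\<bar> \<le> 0" by (simp add: g_def)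
    qed
    then show "L v = L (0,0,0)" by (simp add: g_def split: if_splits)
  qed
  then show ?thesis by blast
next
  case True
  then obtain a r0 where a: "a \<in> {1,2,3}" and r0: "r0 \<in> Lambda B" "shift a r0 \<in> Lambda B"
    and fl: "L (shift a r0) \<noteq> L r0" by blast
  define j where "j = Suc (coord a r0)"
  have jB: "j \<in> {1..B}" using coord_le[OF r0(2), of a] coord_shift[of a r0] unfolding j_def by auto
  have Ra: "L (shift a r0) = R a (L r0)" using edge[OF a r0] fl by blast
  have ca: "coord a r0 < B" using r0 shift_in a by blast
  define P where "P r \<longleftrightarrow> L (shift a r) \<noteq> L r \<and> L r = L r0 \<and> L (shift a r) = L (shift a r0)" for r
  have key: "P r = P (shift b r)"
    if b: "b \<in> {1,2,3}" "b \<noteq> a" and r: "r \<in> Lambda B" "shift b r \<in> Lambda B" "coord a r = coord a r0" for b r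
  proof -
    have s1: "shift a r \<in> Lambda B" using r ca shift_in a by simp
    have cab: "coord a (shift b r) = coord a r" using coord_shift_other[of b a r] b a by metis
    have s2: "shift a (shift b r) \<in> Lambda B" using r(2) cab r(3) ca shift_in a by simp
    have e1: "L (shift a r) = L r \<or> L (shift a r) = R a (L r)" using edge[OF a r(1) s1] .
    have e2: "L (shift b r) = L r \<or> L (shift b r) = R b (L r)" using edge[OF b(1) r(1) r(2)] .
    have s3: "shift b (shift a r) \<in> Lambda B" using s2 shift_comm by metis
    have e3: "L (shift a (shift b r)) = L (shift a r) \<or> L (shift a (shift b r)) = R b (L (shift a r))"
      using edge[OF b(1) s1 s3] shift_comm by metis
    have e4: "L (shift a (shift b r)) = L (shift b r) \<or> L (shift a (shift b r)) = R a (L (shift b r))"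
      using edge[OF a r(2) s2] .
    have ab: "a \<noteq> b" using b by simp
    have n1: "R a (R b (L r)) \<noteq> L r" "R a (R b (L r)) \<noteq> R b (R a (L r))" using nf[OF a b(1) ab r(1)] by auto
    have n2: "R b (R a (L r)) \<noteq> L r" using nf[OF b(1) a b(2) r(1)] by auto
    have pl: "(L (shift a r) \<noteq> L r \<longrightarrow> L (shift b r) = L r \<and> L (shift a (shift b r)) = L (shift a r) \<and>
                L (shift a (shift b r)) \<noteq> L (shift b r)) \<and>
              (L (shift a (shift b r)) \<noteq> L (shift b r) \<longrightarrow> L (shift a r) \<noteq> L r)"
      by (rule plaq[of R a b "L r"]) (use inv a b n1 n2 e1 e2 e3 e4 in auto)
    show ?thesis unfolding P_def using pl by metis
  qed
  have Pall: "P r" if rr: "r \<in> Lambda B" "coord a r = coord a r0" for r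
  proof -
    define g where "g r = (if P r then 0 else 1::real)" for r
    have "\<bar>g r - g r0\<bar> \<le> 2 * real B * 0"
    proof (rule plane_drift[OF a order_refl _ r0(1) rr])
      fix b r assume "b \<in> {1,2,3::nat}" "b \<noteq> a" "r \<in> Lambda B" "shift b r \<in> Lambda B" "coord a r = coord a r0"
      then have "P r = P (shift b r)" using key by blast
      then show "\<bar>g (shift b r) - g r\<bar> \<le> 0" by (simp add: g_def)
    qed
    moreover have "P r0" using fl by (simp add: P_def)
    ultimately show ?thesis by (simp add: g_def split: if_splits)
  qed
  have "R a (L r0) \<noteq> L r0" using Ra fl by simp
  moreover have "\<forall>r\<in>Lambda B. coord a r = j - 1 \<longrightarrow> L r = L r0" using Pall unfolding P_def j_def by auto
  moreover have "\<forall>r\<in>Lambda B. coord a r = j \<longrightarrow> L r = R a (L r0)"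
  proof (intro ballI impI)
    fix v assume v: "v \<in> Lambda B" "coord a v = j"
    define r where "r = setc a (coord a r0) v"
    have rL: "r \<in> Lambda B" unfolding r_def using setc_Lambda v ca by simp
    have ra: "coord a r = coord a r0" by (simp add: r_def coord_setc)
    have sr: "shift a r = v" unfolding r_def shift_setc using v setc_coord j_def by metis
    from Pall[OF rL ra] have "L (shift a r) = L (shift a r0)" by (simp add: P_def)
    then show "L v = R a (L r0)" using sr Ra by simp
  qed
  ultimately show ?thesis using a jB by blast
qed



definition dO :: "complex set \<Rightarrow> complex \<Rightarrow> real" where
  "dO OS x = Min ((\<lambda>p. cmod (x - p)) ` OS)"

lemma dO_le: "finite OS \<Longrightarrow> p \<in> OS \<Longrightarrow> dO OS x \<le> cmod (x - p)"
  unfolding dO_def by (rule Min_le) auto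

lemma dO_att: "finite OS \<Longrightarrow> OS \<noteq> {} \<Longrightarrow> \<exists>p\<in>OS. dO OS x = cmod (x - p)"
proof -
  assume "finite OS" "OS \<noteq> {}"
  then have "Min ((\<lambda>p. cmod (x - p)) ` OS) \<in> (\<lambda>p. cmod (x - p)) ` OS" by (intro Min_in) auto
  then show ?thesis unfolding dO_def by auto
qed

lemma dO_lip1:
  assumes "finite OS" "OS \<noteq> {}"
  shows "dO OS y \<le> dO OS x + cmod (y - x)"
proof -
  obtain p where p: "p \<in> OS" "dO OS x = cmod (x - p)" using dO_att assms by blast
  have "dO OS y \<le> cmod (y - p)" using dO_le assms p by blast
  also have "\<dots> \<le> cmod (y - x) + cmod (x - p)" using norm_triangle_ineq[of "y - x" "x - p"] by simp
  finally show ?thesis using p by simp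
qed

lemma dO_lip2:
  assumes "finite OS" "OS \<noteq> {}" and cl: "\<And>p. p \<in> OS \<Longrightarrow> Rf a p \<in> OS" and a: "a \<in> {1,2,3}"
  shows "dO OS y \<le> dO OS x + cmod (y - Rf a x)" "dO OS x \<le> dO OS y + cmod (y - Rf a x)"
proof -
  obtain p where p: "p \<in> OS" "dO OS x = cmod (x - p)" using dO_att assms by blast
  have "dO OS y \<le> cmod (y - Rf a p)" using dO_le assms p cl by blast
  also have "\<dots> \<le> cmod (y - Rf a x) + cmod (Rf a x - Rf a p)" using norm_triangle_ineq[of "y - Rf a x" "Rf a x - Rf a p"] by simp
  also have "cmod (Rf a x - Rf a p) = cmod (x - p)" by (rule Rf_dist)
  finally show "dO OS y \<le> dO OS x + cmod (y - Rf a x)" using p by simp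
  obtain q where q: "q \<in> OS" "dO OS y = cmod (y - q)" using dO_att assms by blast
  have "dO OS x \<le> cmod (x - Rf a q)" using dO_le assms q cl by blast
  also have "cmod (x - Rf a q) = cmod (Rf a x - q)" using Rf_dist[of a x "Rf a q"] Rf_inv[OF a] by simp
  also have "\<dots> \<le> cmod (Rf a x - y) + cmod (y - q)" using norm_triangle_ineq[of "Rf a x - y" "y - q"] by simp
  finally show "dO OS x \<le> dO OS y + cmod (y - Rf a x)" using q by (simp add: norm_minus_commute)
qed

lemma labels:
  fixes z :: "site \<Rightarrow> complex"
  assumes fin: "finite OS" and cl: "\<And>p a. p \<in> OS \<Longrightarrow> a \<in> {1,2,3} \<Longrightarrow> Rf a p \<in> OS"
  and sep: "\<And>p q. p \<in> OS \<Longrightarrow> q \<in> OS \<Longrightarrow> p \<noteq> q \<Longrightarrow> sp \<le> cmod (p - q)"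
  and steps: "\<And>a r. a \<in> {1,2,3} \<Longrightarrow> r \<in> Lambda B \<Longrightarrow> shift a r \<in> Lambda B \<Longrightarrow>
      cmod (z (shift a r) - z r) \<le> \<delta> \<or> cmod (z (shift a r) - Rf a (z r)) \<le> \<delta>"
  and base: "rb \<in> Lambda B" "pb \<in> OS" "cmod (z rb - pb) \<le> ez"
  and d: "0 \<le> \<delta>" and eps: "2 * (ez + 3 * real B * \<delta>) + \<delta> < sp"
  shows "\<exists>L. (\<forall>r\<in>Lambda B. L r \<in> OS \<and> cmod (z r - L r) \<le> ez + 3 * real B * \<delta>) \<and>
     (\<forall>a\<in>{1,2,3}. \<forall>r. r \<in> Lambda B \<longrightarrow> shift a r \<in> Lambda B \<longrightarrow> L (shift a r) = L r \<or> L (shift a r) = Rf a (L r))"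
proof -
  define \<epsilon> where "\<epsilon> = ez + 3 * real B * \<delta>"
  have ne: "OS \<noteq> {}" using base by blast
  have dist: "dO OS (z r) \<le> \<epsilon>" if r: "r \<in> Lambda B" for r
  proof -
    have "\<bar>dO OS (z r) - dO OS (z rb)\<bar> \<le> 3 * real B * \<delta>"
    proof (rule whole_drift[OF d _ base(1) r])
      fix b r assume b: "b \<in> {1,2,3::nat}" and rr: "r \<in> Lambda B" "shift b r \<in> Lambda B"
      from steps[OF b rr] show "\<bar>dO OS (z (shift b r)) - dO OS (z r)\<bar> \<le> \<delta>"
      proof
        assume h: "cmod (z (shift b r) - z r) \<le> \<delta>"
        have "dO OS (z (shift b r)) \<le> dO OS (z r) + cmod (z (shift b r) - z r)" by (rule dO_lip1[OF fin ne])
        moreover have "dO OS (z r) \<le> dO OS (z (shift b r)) + cmod (z r - z (shift b r))" by (rule dO_lip1[OF fin ne])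
        ultimately show ?thesis using h by (simp add: norm_minus_commute)
      next
        assume h: "cmod (z (shift b r) - Rf b (z r)) \<le> \<delta>"
        have clb: "\<And>p. p \<in> OS \<Longrightarrow> Rf b p \<in> OS" using cl b by blast
        have "dO OS (z (shift b r)) \<le> dO OS (z r) + cmod (z (shift b r) - Rf b (z r))"
          by (rule dO_lip2(1)[OF fin ne clb b])
        moreover have "dO OS (z r) \<le> dO OS (z (shift b r)) + cmod (z (shift b r) - Rf b (z r))"
          by (rule dO_lip2(2)[OF fin ne clb b])
        ultimately show ?thesis using h by simp
      qed
    qed
    moreover have "dO OS (z rb) \<le> ez" using dO_le[OF fin base(2), of "z rb"] base(3) by linarith
    ultimately show ?thesis unfolding \<epsilon>_def by simp
  qed
  define L where "L r = (SOME p. p \<in> OS \<and> cmod (z r - p) \<le> \<epsilon>)" for r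
  have L: "L r \<in> OS \<and> cmod (z r - L r) \<le> \<epsilon>" if r: "r \<in> Lambda B" for r
  proof -
    obtain p where "p \<in> OS" "dO OS (z r) = cmod (z r - p)" using dO_att[OF fin ne] by blast
    then have "\<exists>p. p \<in> OS \<and> cmod (z r - p) \<le> \<epsilon>" using dist[OF r] by auto
    then show ?thesis unfolding L_def by (rule someI_ex)
  qed
  have uniq: "p = q" if "p \<in> OS" "q \<in> OS" "cmod (p - q) \<le> 2 * \<epsilon> + \<delta>" for p q
    using sep[OF that(1,2)] that(3) eps unfolding \<epsilon>_def by force
  have edge: "L (shift a r) = L r \<or> L (shift a r) = Rf a (L r)"
    if a: "a \<in> {1,2,3}" and rr: "r \<in> Lambda B" "shift a r \<in> Lambda B" for a r
  proof -
    have L1: "L r \<in> OS" "cmod (z r - L r) \<le> \<epsilon>" using L[OF rr(1)] by auto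
    have L2: "L (shift a r) \<in> OS" "cmod (z (shift a r) - L (shift a r)) \<le> \<epsilon>" using L[OF rr(2)] by auto
    from steps[OF a rr] show ?thesis
    proof
      assume h: "cmod (z (shift a r) - z r) \<le> \<delta>"
      have "cmod (L (shift a r) - L r) \<le> cmod (L (shift a r) - z (shift a r)) + cmod (z (shift a r) - z r) + cmod (z r - L r)"
        using norm_triangle_ineq[of "L (shift a r) - z (shift a r)" "z (shift a r) - z r"]
          norm_triangle_ineq[of "L (shift a r) - z r" "z r - L r"] by simp
      also have "\<dots> \<le> 2 * \<epsilon> + \<delta>" using h L1 L2 by (simp add: norm_minus_commute)
      finally show ?thesis using uniq L1 L2 by blast
    next
      assume h: "cmod (z (shift a r) - Rf a (z r)) \<le> \<delta>"
      have "cmod (L (shift a r) - Rf a (L r)) \<le> cmod (L (shift a r) - z (shift a r)) + cmod (z (shift a r) - Rf a (z r)) + cmod (Rf a (z r) - Rf a (L r))"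
        using norm_triangle_ineq[of "L (shift a r) - z (shift a r)" "z (shift a r) - Rf a (z r)"]
          norm_triangle_ineq[of "L (shift a r) - Rf a (z r)" "Rf a (z r) - Rf a (L r)"] by simp
      also have "\<dots> \<le> 2 * \<epsilon> + \<delta>" using h L1 L2 Rf_dist[of a "z r" "L r"] by (simp add: norm_minus_commute)
      finally show ?thesis using uniq L1 L2 cl[OF L1(1) a] by blast
    qed
  qed
  show ?thesis using L edge unfolding \<epsilon>_def by blast
qed



lemma fb: "0 \<le> (x::real) \<Longrightarrow> 1/2 \<le> y \<Longrightarrow> x * y < 2 * G \<Longrightarrow> x < 4 * G"
proof -
  assume h: "0 \<le> x" "1/2 \<le> y" "x * y < 2 * G"
  have "x * (1/2) \<le> x * y" using h by (intro mult_left_mono) auto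
  then show ?thesis using h by linarith
qed

lemma M_nz: "m \<in> Mset \<Longrightarrow> m \<noteq> 0"
  by (auto simp: Mset_def)

lemma M_unit: "m \<in> Mset \<Longrightarrow> cmod m = 1"
  by (auto simp: Mset_def)

lemma sepA: "m1 \<in> Mset \<Longrightarrow> m2 \<in> Mset \<Longrightarrow> m1 \<noteq> m2 \<Longrightarrow> cmod (x - m1) \<le> e \<Longrightarrow> cmod (y - m2) \<le> e
   \<Longrightarrow> 1 - 2 * e \<le> cmod (x - y)"
proof -
  assume h: "m1 \<in> Mset" "m2 \<in> Mset" "m1 \<noteq> m2" "cmod (x - m1) \<le> e" "cmod (y - m2) \<le> e"
  have "1 \<le> cmod (m1 - m2)" using M_sep h by blast
  also have "cmod (m1 - m2) \<le> cmod (m1 - x) + cmod (x - y) + cmod (y - m2)"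
    using norm_triangle_ineq[of "m1 - x" "x - y"] norm_triangle_ineq[of "m1 - y" "y - m2"] by simp
  finally show ?thesis using h by (simp add: norm_minus_commute)
qed

lemma refl_bound:
  assumes x: "cmod x = 1" and far: "\<forall>m\<in>Mset. e \<le> cmod (x - m)" and e: "0 \<le> e" and a: "a \<in> {1,2,3}"
  shows "7/5 * e \<le> cmod (x - Rf a x)"
proof -
  have u: "cmod (cis (phi a)) = 1" by simp
  have "e \<le> cmod (x - cis (phi a))" using far phi_M(1)[OF a] by blast
  moreover have "e \<le> cmod (x + cis (phi a))" using far phi_M(2)[OF a] by force
  moreover have "(cmod (x - cis (phi a)))^2 + (cmod (x + cis (phi a)))^2 = 4" by (rule parallelogram[OF x u])
  ultimately have "7/5 * e \<le> cmod (x - cis (phi a)) * cmod (x + cis (phi a))" using e by (intro prod_bound) auto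
  then show ?thesis using Rf_prod[OF x] by simp
qed

lemma far_orb:
  assumes far: "\<forall>m\<in>Mset. e \<le> cmod (w - m)" and p: "p \<in> Orb w"
  shows "\<forall>m\<in>Mset. e \<le> cmod (p - m)"
proof -
  have rot: "\<forall>m\<in>Mset. e \<le> cmod (c * y - m)" if y: "\<forall>m\<in>Mset. e \<le> cmod (y - m)" and c: "c = rho \<or> c = rho2" for y c
  proof
    fix m assume m: "m \<in> Mset"
    have "c * y - m = c * (y - (if c = rho then rho2 else rho) * m)" using c by (auto simp: algebra_simps)
    then have "cmod (c * y - m) = cmod (y - (if c = rho then rho2 else rho) * m)" using c by (auto simp: norm_mult)
    moreover have "(if c = rho then rho2 else rho) * m \<in> Mset" using M_closed m by auto
    ultimately show "e \<le> cmod (c * y - m)" using y by auto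
  qed
  have refl: "\<forall>m\<in>Mset. e \<le> cmod (Rf a y - m)" if y: "\<forall>m\<in>Mset. e \<le> cmod (y - m)" and a: "a \<in> {1,2,3}" for y a
  proof
    fix m assume m: "m \<in> Mset"
    have "cmod (Rf a y - m) = cmod (Rf a y - Rf a (Rf a m))" using Rf_inv[OF a] by simp
    also have "\<dots> = cmod (y - Rf a m)" by (rule Rf_dist)
    finally show "e \<le> cmod (Rf a y - m)" using y M_closed(3)[OF m a] by auto
  qed
  have "p = w \<or> p = rho * w \<or> p = rho2 * w \<or> p = Rf 1 w \<or> p = Rf 2 w \<or> p = Rf 3 w"
    using p by (auto simp: Orb_def Rf_simps)
  then show ?thesis using far rot[OF far] refl[OF far] by auto
qed

lemma unit_cis_Arg: "cmod p = 1 \<Longrightarrow> cis (Arg p) = p"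
proof -
  assume "cmod p = 1"
  then have "p \<noteq> 0" by auto
  then have "cis (Arg p) = sgn p" by (rule cis_Arg)
  then show ?thesis using \<open>cmod p = 1\<close> by (simp add: sgn_div_norm)
qed



lemma main_lemma:
  fixes \<kappa> \<Gamma> t0 \<Delta> :: real and B s :: nat and \<theta> :: config
  assumes kp: "0 < \<kappa>" and gp: "0 < \<Gamma>" and B1: "1 \<le> B" and s1: "1 \<le> s" and kc: "\<kappa> \<le> 1/100"
  and bg: "real B * sqrt \<Gamma> \<le> 1/100 * \<kappa>" and De: "\<Delta> = 12 * real B * \<Gamma> / \<kappa>"
  and sD: "real s * \<Delta> > 4 * pi" and th: "\<theta> \<in> Bad_SW B \<Gamma> \<kappa>"
  shows "\<theta> \<in> (\<Union>i\<in>{1..s}. Bad0 B \<Gamma> \<kappa> \<Delta> (theta_star t0 s i) \<union>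
             (\<Union>a\<in>{1,2,3}. \<Union>j\<in>{1..B}. Bad_aj B \<Gamma> \<kappa> \<Delta> (theta_star t0 s i) a j))"
proof -
  define z where "z r = cis (\<theta> r)" for r
  have zu: "cmod (z r) = 1" for r by (simp add: z_def)
  have ge: "good_edges B \<Gamma> \<theta>" and bad: "\<theta> \<in> Bad B \<Gamma> \<kappa>" using th by (auto simp: Bad_SW_def Bad_E_def)
  have NB: "\<not> (\<exists>\<tau>\<in>{1..6::nat}. \<forall>r\<in>Lambda B. near_mod (\<theta> r) (pi / 3 * real \<tau>) (2 * \<kappa>))"
    using bad ge by (simp add: Bad_def good_block_def)
  have edge: "cmod (z (shift a r) - z r) * cmod (z (shift a r) - Rf a (z r)) < 2 * \<Gamma>"
    if a: "a \<in> {1,2,3}" and rr: "r \<in> Lambda B" "shift a r \<in> Lambda B" for a r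
  proof -
    have "\<bar>Scomp a \<theta> r - Scomp a \<theta> (shift a r)\<bar> < \<Gamma>" using ge a rr unfolding good_edges_def by blast
    moreover have "cmod (z r - z (shift a r)) * cmod (z (shift a r) - Rf a (z r)) =
        2 * \<bar>cos (\<theta> r - phi a) - cos (\<theta> (shift a r) - phi a)\<bar>"
      unfolding z_def Rf_cis by (rule edge_id)
    ultimately show ?thesis by (simp add: Scomp_def norm_minus_commute)
  qed
  have Bad_ajI: "\<theta> \<in> Bad_aj B \<Gamma> \<kappa> \<Delta> ts a j"
    if "\<not> near_mod ts (phi a) \<kappa>" "\<not> near_mod ts (phi a + pi) \<kappa>"
       "\<forall>r\<in>Lambda B. coord a r = j - 1 \<longrightarrow> near_mod (\<theta> r) ts \<Delta>"
       "\<forall>r\<in>Lambda B. coord a r = j \<longrightarrow> near_mod (\<theta> r) (2 * phi a - ts) \<Delta>" for ts a j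
    using that th unfolding Bad_aj_def hyperplane_def by auto

  define X where "X = real B * \<Gamma> / \<kappa>"
  have sg0: "0 \<le> sqrt \<Gamma>" using gp by simp
  have sg: "sqrt \<Gamma> \<le> \<kappa>/100"
  proof -
    have "1 * sqrt \<Gamma> \<le> real B * sqrt \<Gamma>" using B1 sg0 by (intro mult_right_mono) auto
    then show ?thesis using bg by simp
  qed
  have GG: "\<Gamma> = sqrt \<Gamma> * sqrt \<Gamma>" using gp by simp
  have XK: "X * \<kappa> = real B * \<Gamma>" unfolding X_def using kp by simp
  have "real B * \<Gamma> = (real B * sqrt \<Gamma>) * sqrt \<Gamma>" using GG by (metis mult.assoc)
  also have "\<dots> \<le> (\<kappa>/100) * (\<kappa>/100)" using bg sg sg0 kp by (intro mult_mono) auto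
  finally have "X * \<kappa> \<le> \<kappa> * (\<kappa> / 10000)" using XK by simp
  then have "\<kappa> * X \<le> \<kappa> * (\<kappa> / 10000)" by (simp add: mult.commute)
  then have Xb: "X \<le> \<kappa> / 10000" using kp by (rule mult_left_le_imp_le)
  have X0: "0 < X" unfolding X_def using kp gp B1 by simp
  have DX: "\<Delta> = 12 * X" unfolding De X_def by simp
  have ps: "pi / real s < 3 * X"
  proof -
    have "real s * \<Delta> = 4 * ((3 * X) * real s)" using DX by simp
    then have "pi < (3 * X) * real s" using sD by linarith
    moreover have "0 < real s" using s1 by simp
    ultimately show ?thesis by (simp add: pos_divide_less_eq)
  qed
  have ps0: "0 \<le> pi / real s" by simp
  have GB: "\<Gamma> \<le> real B * \<Gamma>"
  proof -
    have "1 * \<Gamma> \<le> real B * \<Gamma>" using B1 gp by (intro mult_right_mono) auto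
    then show ?thesis by simp
  qed
  have Dpi: "\<Delta> \<le> pi" using DX Xb kc pi_ge_two by linarith
  have D0: "0 < \<Delta>" using DX X0 by simp
  have sinD: "11 * X < 2 * sin (\<Delta>/2)"
  proof -
    have "\<Delta>/2 - (\<Delta>/2)^3/6 \<le> sin (\<Delta>/2)" using D0 by (intro sin_lower) simp
    moreover have "(\<Delta>/2)^3/6 = 36 * X * X * X" using DX by (simp add: power3_eq_cube)
    moreover have "X * X \<le> 1/100"
    proof -
      have "X \<le> 1/10" using Xb kc by linarith
      then have "X * X \<le> (1/10) * (1/10)" using X0 by (intro mult_mono) auto
      then show ?thesis by simp
    qed
    then have "(X * X) * X \<le> (1/100) * X" using X0 by (intro mult_right_mono) auto
    then have "36 * X * X * X < X / 2" using X0 by (simp add: mult.assoc)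
    ultimately show ?thesis using DX by linarith
  qed
  have nearI: "near_mod x y \<Delta>" if "cmod (cis x - cis y) \<le> 11 * X" for x y
  proof (rule near_mod_suff[OF D0 Dpi])
    show "cmod (cis x - cis y) < 2 * sin (\<Delta> / 2)" using that sinD by linarith
  qed
  have farI: "\<not> near_mod ts ph \<kappa>" if "\<kappa> \<le> cmod (cis ts - cis ph)" for ts ph
    using near_mod_chord that by fastforce
  have z0: "(0,0,0) \<in> Lambda B" by (simp add: Lambda_def)
  have plane0: "setc a (j - 1) (0,0,0) \<in> Lambda B" "coord a (setc a (j - 1) (0,0,0)) = j - 1"
    if "j \<in> {1..B}" for a j
  proof -
    show "setc a (j - 1) (0,0,0) \<in> Lambda B" by (rule setc_Lambda[OF z0]) (use that in auto)
    show "coord a (setc a (j - 1) (0,0,0)) = j - 1" by (rule coord_setc)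
  qed
  have planej: "setc a (j - 1) v \<in> Lambda B" "coord a (setc a (j - 1) v) = j - 1" "shift a (setc a (j - 1) v) = v"
    if "j \<in> {1..B}" "v \<in> Lambda B" "coord a v = j" for a j v
  proof -
    show "setc a (j - 1) v \<in> Lambda B" by (rule setc_Lambda) (use that in auto)
    show "coord a (setc a (j - 1) v) = j - 1" by (rule coord_setc)
    have "Suc (j - 1) = j" using that by simp
    then show "shift a (setc a (j - 1) v) = v" using that by (metis shift_setc setc_coord)
  qed
  have Rf_nf: "\<And>a b r. a \<in> {1,2,3} \<Longrightarrow> b \<in> {1,2,3} \<Longrightarrow> a \<noteq> b \<Longrightarrow> x \<noteq> 0 \<Longrightarrow>
             Rf a (Rf b x) \<noteq> x \<and> Rf a (Rf b x) \<noteq> Rf b (Rf a x)" for x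
    using Rf_comm by blast
  show ?thesis
  proof (cases "\<exists>r\<in>Lambda B. \<exists>m\<in>Mset. cmod (z r - m) < 3*\<kappa>/2")
    case True
    then obtain r1 m1 where r1: "r1 \<in> Lambda B" "m1 \<in> Mset" "cmod (z r1 - m1) \<le> 3*\<kappa>/2"
      by (meson less_imp_le)
    define eA where "eA = 3*\<kappa>/2 + 3 * real B * (2 * sqrt \<Gamma>)"
    have eA: "eA \<le> 3*\<kappa>/2 + 6*\<kappa>/100"
    proof -
      have "3 * real B * (2 * sqrt \<Gamma>) = 6 * (real B * sqrt \<Gamma>)" by simp
      then show ?thesis unfolding eA_def using bg by linarith
    qed
    have steps: "cmod (z (shift a r) - z r) \<le> 2 * sqrt \<Gamma> \<or> cmod (z (shift a r) - Rf a (z r)) \<le> 2 * sqrt \<Gamma>"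
      if a: "a \<in> {1,2,3}" and rr: "r \<in> Lambda B" "shift a r \<in> Lambda B" for a r
    proof (rule ccontr)
      assume "\<not> ?thesis"
      then have "2 * sqrt \<Gamma> < cmod (z (shift a r) - z r)" "2 * sqrt \<Gamma> < cmod (z (shift a r) - Rf a (z r))" by auto
      then have "(2 * sqrt \<Gamma>) * (2 * sqrt \<Gamma>) < cmod (z (shift a r) - z r) * cmod (z (shift a r) - Rf a (z r))"
        using sg0 by (intro mult_strict_mono) auto
      moreover have "(2 * sqrt \<Gamma>) * (2 * sqrt \<Gamma>) = 4 * \<Gamma>" using gp by simp
      ultimately show False using edge[OF a rr] gp by linarith
    qed
    obtain L where L: "\<forall>r\<in>Lambda B. L r \<in> Mset \<and> cmod (z r - L r) \<le> eA"
      and Le: "\<forall>a\<in>{1,2,3}. \<forall>r. r \<in> Lambda B \<longrightarrow> shift a r \<in> Lambda B \<longrightarrow> L (shift a r) = L r \<or> L (shift a r) = Rf a (L r)"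
    proof -
      have "\<exists>L. (\<forall>r\<in>Lambda B. L r \<in> Mset \<and> cmod (z r - L r) \<le> 3*\<kappa>/2 + 3 * real B * (2 * sqrt \<Gamma>)) \<and>
         (\<forall>a\<in>{1,2,3}. \<forall>r. r \<in> Lambda B \<longrightarrow> shift a r \<in> Lambda B \<longrightarrow> L (shift a r) = L r \<or> L (shift a r) = Rf a (L r))"
      proof (rule labels[where sp=1 and rb=r1 and pb=m1])
        show "finite Mset" by (simp add: Mset_def)
        show "2 * (3*\<kappa>/2 + 3 * real B * (2 * sqrt \<Gamma>)) + 2 * sqrt \<Gamma> < 1"
        proof -
          define T where "T = 3 * real B * (2 * sqrt \<Gamma>)"
          have "T \<le> 6*\<kappa>/100" using eA unfolding eA_def T_def by linarith
          then show ?thesis unfolding T_def[symmetric] using kc sg by (simp add: field_simps)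
        qed
        show "\<And>p a. p \<in> Mset \<Longrightarrow> a \<in> {1,2,3} \<Longrightarrow> Rf a p \<in> Mset" by (rule M_closed(3))
        show "\<And>p q. p \<in> Mset \<Longrightarrow> q \<in> Mset \<Longrightarrow> p \<noteq> q \<Longrightarrow> 1 \<le> cmod (p - q)" by (rule M_sep)
        show "\<And>a r. a \<in> {1,2,3} \<Longrightarrow> r \<in> Lambda B \<Longrightarrow> shift a r \<in> Lambda B \<Longrightarrow>
          cmod (z (shift a r) - z r) \<le> 2 * sqrt \<Gamma> \<or> cmod (z (shift a r) - Rf a (z r)) \<le> 2 * sqrt \<Gamma>"
          by (rule steps)
        show "r1 \<in> Lambda B" "m1 \<in> Mset" "cmod (z r1 - m1) \<le> 3*\<kappa>/2" using r1 by auto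
        show "0 \<le> 2 * sqrt \<Gamma>" using sg0 by simp
      qed
      then show ?thesis using that unfolding eA_def by blast
    qed
    have comb_res: "(\<forall>r\<in>Lambda B. L r = L (0,0,0)) \<or>
      (\<exists>a\<in>{1,2,3}. \<exists>j\<in>{1..B}. \<exists>p. Rf a p \<noteq> p \<and> (\<forall>r\<in>Lambda B. coord a r = j - 1 \<longrightarrow> L r = p) \<and>
        (\<forall>r\<in>Lambda B. coord a r = j \<longrightarrow> L r = Rf a p))"
    proof (rule comb[where R=Rf])
      show "\<And>a x. a \<in> {1,2,3} \<Longrightarrow> Rf a (Rf a x) = x" by (rule Rf_inv)
      show "\<And>a r. a \<in> {1,2,3} \<Longrightarrow> r \<in> Lambda B \<Longrightarrow> shift a r \<in> Lambda B \<Longrightarrow>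
             L (shift a r) = L r \<or> L (shift a r) = Rf a (L r)" using Le by blast
      fix a b r assume h: "a \<in> {1,2,3::nat}" "b \<in> {1,2,3::nat}" "a \<noteq> b" "r \<in> Lambda B"
      have "L r \<noteq> 0" using L h(4) M_nz by blast
      then show "Rf a (Rf b (L r)) \<noteq> L r \<and> Rf a (Rf b (L r)) \<noteq> Rf b (Rf a (L r))"
        using Rf_comm[OF h(1,2,3)] by blast
    qed
    have sin_k: "eA < 2 * sin \<kappa>"
    proof -
      have "\<kappa> - \<kappa>^3/6 \<le> sin \<kappa>" using kp by (intro sin_lower) simp
      moreover have "\<kappa>^3/6 \<le> \<kappa> / 100"
      proof -
        have "\<kappa> * \<kappa> \<le> (1/10) * (1/10)" using kp kc by (intro mult_mono) auto
        then have "(\<kappa> * \<kappa>) * \<kappa> \<le> (1/100) * \<kappa>" using kp by (intro mult_right_mono) auto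
        moreover have "\<kappa>^3 = \<kappa> * \<kappa> * \<kappa>" by (simp add: power3_eq_cube)
        ultimately show ?thesis using kp by linarith
      qed
      ultimately show ?thesis using eA kp by linarith
    qed
    from comb_res show ?thesis
    proof
      assume const: "\<forall>r\<in>Lambda B. L r = L (0,0,0)"
      have "L (0,0,0) \<in> Mset" using L z0 by blast
      then obtain \<tau> where \<tau>: "\<tau> \<in> {1..6::nat}" "L (0,0,0) = cis (pi/3 * real \<tau>)" using M_cis by blast
      have "\<forall>r\<in>Lambda B. near_mod (\<theta> r) (pi / 3 * real \<tau>) (2 * \<kappa>)"
      proof
        fix r assume r: "r \<in> Lambda B"
        have "cmod (z r - L r) \<le> eA" using L r by blast
        moreover have "L r = cis (pi/3 * real \<tau>)" using const r \<tau> by simp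
        ultimately have "cmod (cis (\<theta> r) - cis (pi/3 * real \<tau>)) \<le> eA" unfolding z_def by simp
        then show "near_mod (\<theta> r) (pi / 3 * real \<tau>) (2 * \<kappa>)"
          using sin_k kp kc pi_ge_two by (intro near_mod_suff) auto
      qed
      then show ?thesis using NB \<tau> by blast
    next
      assume "\<exists>a\<in>{1,2,3}. \<exists>j\<in>{1..B}. \<exists>p. Rf a p \<noteq> p \<and> (\<forall>r\<in>Lambda B. coord a r = j - 1 \<longrightarrow> L r = p) \<and>
        (\<forall>r\<in>Lambda B. coord a r = j \<longrightarrow> L r = Rf a p)"
      then obtain a j p where a: "a \<in> {1,2,3}" and j: "j \<in> {1..B}" and pf: "Rf a p \<noteq> p"
        and P0: "\<forall>r\<in>Lambda B. coord a r = j - 1 \<longrightarrow> L r = p"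
        and P1: "\<forall>r\<in>Lambda B. coord a r = j \<longrightarrow> L r = Rf a p" by blast
      define u0 where "u0 = setc a (j - 1) (0,0,0)"
      have u0: "u0 \<in> Lambda B" "coord a u0 = j - 1" using plane0[OF j] unfolding u0_def by auto
      have pM: "p \<in> Mset" using L P0 u0 by metis
      have RpM: "Rf a p \<in> Mset" using M_closed(3)[OF pM a] .
      have Lz: "cmod (z r - L r) \<le> eA" if "r \<in> Lambda B" for r using L that by blast
      have jB: "j - 1 < B" using j by auto
      have sepE: "1/2 \<le> cmod (x - y)" if "m1 \<in> Mset" "m2 \<in> Mset" "m1 \<noteq> m2" "cmod (x - m1) \<le> eA" "cmod (y - m2) \<le> eA" for m1 m2 x y
        using sepA[OF that] eA kc by linarith
      have instep: "cmod (z (shift b r) - z r) \<le> 12 * \<Gamma>"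
        if b: "b \<in> {1,2,3}" "b \<noteq> a" and rr: "r \<in> Lambda B" "shift b r \<in> Lambda B" "coord a r = j - 1" for b r
      proof -
        have cab: "coord a (shift b r) = coord a r" using coord_shift_other[of b a r] b a by metis
        have Lr: "L r = p" "L (shift b r) = p" using P0 rr cab by auto
        show ?thesis
        proof (cases "Rf b p = p")
          case False
          have "1/2 \<le> cmod (z (shift b r) - Rf b (z r))"
          proof (rule sepE[of p "Rf b p"])
            show "p \<in> Mset" "Rf b p \<in> Mset" "p \<noteq> Rf b p" using pM M_closed(3)[OF pM b(1)] False by auto
            show "cmod (z (shift b r) - p) \<le> eA" using Lz[OF rr(2)] Lr by simp
            show "cmod (Rf b (z r) - Rf b p) \<le> eA" using Lz[OF rr(1)] Lr Rf_dist by metis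
          qed
          then have "cmod (z (shift b r) - z r) < 4 * \<Gamma>" using fb[OF norm_ge_zero _ edge[OF b(1) rr(1,2)]] by blast
          then show ?thesis using gp by simp
        next
          case True
          define w where "w = shift a r"
          define w' where "w' = shift a (shift b r)"
          have wL: "w \<in> Lambda B" "w' \<in> Lambda B" unfolding w_def w'_def using shift_in a rr cab jB by auto
          have wc: "coord a w = j" "coord a w' = j" unfolding w_def w'_def using coord_shift rr cab j by auto
          have Lw: "L w = Rf a p" "L w' = Rf a p" using P1 wL wc by auto
          have bw: "shift b w = w'" unfolding w_def w'_def by (rule shift_comm)
          have p0: "p \<noteq> 0" using M_nz pM by blast
          have qf: "Rf b (Rf a p) \<noteq> Rf a p"
          proof
            assume "Rf b (Rf a p) = Rf a p"
            then have "Rf b (Rf a p) = Rf a (Rf b p)" using True by simp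
            then show False using Rf_comm(2)[OF b(1) a b(2) p0] by simp
          qed
          have "1/2 \<le> cmod (z w' - Rf b (z w))"
          proof (rule sepE[of "Rf a p" "Rf b (Rf a p)"])
            show "Rf a p \<in> Mset" "Rf b (Rf a p) \<in> Mset" "Rf a p \<noteq> Rf b (Rf a p)" using RpM M_closed(3)[OF RpM b(1)] qf by auto
            show "cmod (z w' - Rf a p) \<le> eA" using Lz[OF wL(2)] Lw by simp
            show "cmod (Rf b (z w) - Rf b (Rf a p)) \<le> eA" using Lz[OF wL(1)] Lw Rf_dist by metis
          qed
          moreover have eb: "cmod (z w' - z w) * cmod (z w' - Rf b (z w)) < 2 * \<Gamma>"
            using edge[OF b(1) wL(1)] bw wL(2) by simp
          ultimately have s1: "cmod (z w' - z w) < 4 * \<Gamma>" using fb[OF norm_ge_zero] by blast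
          have "1/2 \<le> cmod (z w - z r)"
            by (rule sepE[of "Rf a p" p]) (use RpM pM pf Lz[OF wL(1)] Lz[OF rr(1)] Lw Lr in auto)
          moreover have "cmod (z w - Rf a (z r)) * cmod (z w - z r) < 2 * \<Gamma>"
            using edge[OF a rr(1) wL(1)[unfolded w_def]] unfolding w_def by (simp add: mult.commute)
          ultimately have s2: "cmod (z w - Rf a (z r)) < 4 * \<Gamma>" using fb[OF norm_ge_zero] by blast
          have "1/2 \<le> cmod (z w' - z (shift b r))"
            by (rule sepE[of "Rf a p" p]) (use RpM pM pf Lz[OF wL(2)] Lz[OF rr(2)] Lw Lr in auto)
          moreover have "cmod (z w' - Rf a (z (shift b r))) * cmod (z w' - z (shift b r)) < 2 * \<Gamma>"
            using edge[OF a rr(2) wL(2)[unfolded w'_def]] unfolding w'_def by (simp add: mult.commute)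
          ultimately have s3: "cmod (z w' - Rf a (z (shift b r))) < 4 * \<Gamma>" using fb[OF norm_ge_zero] by blast
          have "cmod (z (shift b r) - z r) = cmod (Rf a (z (shift b r)) - Rf a (z r))" by (simp add: Rf_dist)
          also have "\<dots> \<le> cmod (Rf a (z (shift b r)) - z w') + cmod (z w' - z w) + cmod (z w - Rf a (z r))"
            using norm_triangle_ineq[of "Rf a (z (shift b r)) - z w'" "z w' - z w"]
              norm_triangle_ineq[of "Rf a (z (shift b r)) - z w" "z w - Rf a (z r)"] by simp
          moreover have "cmod (Rf a (z (shift b r)) - z w') = cmod (z w' - Rf a (z (shift b r)))" by (rule norm_minus_commute)
          ultimately show ?thesis using s1 s2 s3 by linarith
        qed
      qed
      have pl: "cmod (z v - z u0) \<le> 24 * real B * \<Gamma>" if v: "v \<in> Lambda B" "coord a v = j - 1" for v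
      proof -
        have "\<bar>cmod (z v - z u0) - cmod (z u0 - z u0)\<bar> \<le> 2 * real B * (12 * \<Gamma>)"
        proof (rule plane_drift[where g="\<lambda>r. cmod (z r - z u0)", OF a _ _ u0(1) v(1)])
          show "0 \<le> 12 * \<Gamma>" using gp by simp
          show "coord a v = coord a u0" using v u0 by simp
          fix b r assume "b \<in> {1,2,3::nat}" "b \<noteq> a" "r \<in> Lambda B" "shift b r \<in> Lambda B" "coord a r = coord a u0"
          then have "cmod (z (shift b r) - z r) \<le> 12 * \<Gamma>" using instep u0 by simp
          moreover have "\<bar>cmod (z (shift b r) - z u0) - cmod (z r - z u0)\<bar> \<le> cmod (z (shift b r) - z r)"
            using norm_triangle_ineq3[of "z (shift b r) - z u0" "z r - z u0"] by simp
          ultimately show "\<bar>cmod (z (shift b r) - z u0) - cmod (z r - z u0)\<bar> \<le> 12 * \<Gamma>" by linarith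
        qed
        then show ?thesis by simp
      qed
      obtain i where i: "i \<in> {1..s}" and gi: "cmod (cis (\<theta> u0) - cis (theta_star t0 s i)) \<le> pi / real s"
        using grid[OF s1] by blast
      define ts where "ts = theta_star t0 s i"
      have gi': "cmod (z u0 - cis ts) \<le> pi / real s" using gi unfolding z_def ts_def .
      have BG: "28 * real B * \<Gamma> \<le> X / 2"
      proof -
        have "28 * real B * \<Gamma> = 28 * X * \<kappa>" unfolding X_def using kp by simp
        also have "\<dots> \<le> X / 2"
        proof -
          have "X * \<kappa> \<le> X * (1/100)" using kc X0 by (intro mult_left_mono) auto
          moreover have "28 * X * \<kappa> = 28 * (X * \<kappa>)" by simp
          ultimately show ?thesis using X0 by linarith
        qed
        finally show ?thesis .
      qed
      have B0: "0 \<le> real B * \<Gamma>" using gp by simp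
      have c1: "\<forall>r\<in>Lambda B. coord a r = j - 1 \<longrightarrow> near_mod (\<theta> r) ts \<Delta>"
      proof (intro ballI impI)
        fix v assume v: "v \<in> Lambda B" "coord a v = j - 1"
        have "cmod (z v - cis ts) \<le> cmod (z v - z u0) + cmod (z u0 - cis ts)"
          using norm_triangle_ineq[of "z v - z u0" "z u0 - cis ts"] by simp
        also have "\<dots> \<le> 11 * X" using pl[OF v] gi' ps BG B0 gp by linarith
        finally show "near_mod (\<theta> v) ts \<Delta>" using nearI unfolding z_def by blast
      qed
      have c2: "\<forall>r\<in>Lambda B. coord a r = j \<longrightarrow> near_mod (\<theta> r) (2 * phi a - ts) \<Delta>"
      proof (intro ballI impI)
        fix v assume v: "v \<in> Lambda B" "coord a v = j"
        define r where "r = setc a (j - 1) v"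
        have r: "r \<in> Lambda B" "coord a r = j - 1" "shift a r = v" using planej[OF j v] unfolding r_def by auto
        have Lr: "L r = p" "L v = Rf a p" using P0 P1 r v by auto
        have "1/2 \<le> cmod (z v - z r)"
          by (rule sepE[of "Rf a p" p]) (use RpM pM pf Lz[OF r(1)] Lz[OF v(1)] Lr in auto)
        moreover have "cmod (z v - Rf a (z r)) * cmod (z v - z r) < 2 * \<Gamma>"
          using edge[OF a r(1)] r v by (simp add: mult.commute)
        ultimately have e1: "cmod (z v - Rf a (z r)) < 4 * \<Gamma>" using fb[OF norm_ge_zero] by blast
        have "cmod (z v - cis (2 * phi a - ts)) = cmod (z v - Rf a (cis ts))" by (simp add: Rf_cis)
        also have "\<dots> \<le> cmod (z v - Rf a (z r)) + cmod (Rf a (z r) - Rf a (cis ts))"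
          using norm_triangle_ineq[of "z v - Rf a (z r)" "Rf a (z r) - Rf a (cis ts)"] by simp
        also have "cmod (Rf a (z r) - Rf a (cis ts)) = cmod (z r - cis ts)" by (rule Rf_dist)
        also have "cmod (z r - cis ts) \<le> cmod (z r - z u0) + cmod (z u0 - cis ts)"
          using norm_triangle_ineq[of "z r - z u0" "z u0 - cis ts"] by simp
        finally have "cmod (z v - cis (2 * phi a - ts)) \<le> 11 * X"
          using e1 pl[OF r(1,2)] gi' ps BG B0 gp GB by linarith
        then show "near_mod (\<theta> v) (2 * phi a - ts) \<Delta>" using nearI unfolding z_def by blast
      qed
      have exc: "\<kappa> \<le> cmod (cis ts - \<mu>)" if \<mu>: "\<mu> \<in> Mset" "Rf a \<mu> = \<mu>" for \<mu>
      proof -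
        have "p \<noteq> \<mu>" using pf \<mu> by auto
        then have "1 \<le> cmod (p - \<mu>)" using M_sep pM \<mu> by blast
        also have "cmod (p - \<mu>) \<le> cmod (p - z u0) + cmod (z u0 - cis ts) + cmod (cis ts - \<mu>)"
          using norm_triangle_ineq[of "p - z u0" "z u0 - cis ts"] norm_triangle_ineq[of "p - cis ts" "cis ts - \<mu>"] by simp
        moreover have "cmod (p - z u0) \<le> eA" using Lz[OF u0(1)] P0 u0 by (simp add: norm_minus_commute)
        ultimately show ?thesis using gi' ps Xb eA kc by linarith
      qed
      have x1: "\<not> near_mod ts (phi a) \<kappa>"
        using farI exc[OF phi_M(1)[OF a] Rf_fix] by blast
      have fx: "Rf a (- cis (phi a)) = - cis (phi a)" by (simp add: Rf_neg Rf_fix)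
      have "\<kappa> \<le> cmod (cis ts - cis (phi a + pi))" using exc[OF phi_M(2)[OF a] fx] by (simp add: cis_plus_pi)
      then have x2: "\<not> near_mod ts (phi a + pi) \<kappa>" using farI by blast
      have "\<theta> \<in> Bad_aj B \<Gamma> \<kappa> \<Delta> ts a j" using Bad_ajI[OF x1 x2 c1 c2] .
      then show ?thesis using i a j unfolding ts_def by blast
    qed
  next
    case False
    then have far: "\<forall>r\<in>Lambda B. \<forall>m\<in>Mset. 3*\<kappa>/2 \<le> cmod (z r - m)" by (auto simp: not_less)
    define dB where "dB = 40 * \<Gamma> / (21 * \<kappa>)"
    have dB0: "0 \<le> dB" unfolding dB_def using gp kp by simp
    have dBk: "dB * (21 * \<kappa> / 20) = 2 * \<Gamma>" unfolding dB_def using kp by (simp add: field_simps)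
    have steps: "cmod (z (shift a r) - z r) \<le> dB \<or> cmod (z (shift a r) - Rf a (z r)) \<le> dB"
      if a: "a \<in> {1,2,3}" and rr: "r \<in> Lambda B" "shift a r \<in> Lambda B" for a r
    proof (rule ccontr)
      assume "\<not> ?thesis"
      then have h: "dB < cmod (z (shift a r) - z r)" "dB < cmod (z (shift a r) - Rf a (z r))" by auto
      have fr: "\<forall>m\<in>Mset. 3*\<kappa>/2 \<le> cmod (z r - m)" using far rr(1) by blast
      have "7/5 * (3*\<kappa>/2) \<le> cmod (z r - Rf a (z r))"
        using refl_bound[OF zu fr _ a] kp by simp
      also have "\<dots> \<le> cmod (z (shift a r) - z r) + cmod (z (shift a r) - Rf a (z r))"
        using norm_triangle_ineq[of "z r - z (shift a r)" "z (shift a r) - Rf a (z r)"] by (simp add: norm_minus_commute)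
      finally have sum: "21*\<kappa>/10 \<le> cmod (z (shift a r) - z r) + cmod (z (shift a r) - Rf a (z r))" by simp
      have "2 * \<Gamma> < cmod (z (shift a r) - z r) * cmod (z (shift a r) - Rf a (z r))"
      proof (cases "21*\<kappa>/20 \<le> cmod (z (shift a r) - z r)")
        case True
        have "2 * \<Gamma> = (21 * \<kappa> / 20) * dB" using dBk by (simp add: mult.commute)
        also have "\<dots> < cmod (z (shift a r) - z r) * cmod (z (shift a r) - Rf a (z r))"
          using True h kp dB0 by (intro mult_le_less_imp_less) auto
        finally show ?thesis .
      next
        case False
        then have F: "21*\<kappa>/20 \<le> cmod (z (shift a r) - Rf a (z r))" using sum by linarith
        have "2 * \<Gamma> = dB * (21 * \<kappa> / 20)" using dBk by simp
        also have "\<dots> < cmod (z (shift a r) - z r) * cmod (z (shift a r) - Rf a (z r))"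
          using F h dB0 kp by (intro mult_less_le_imp_less) auto
        finally show ?thesis .
      qed
      then show False using edge[OF a rr] by simp
    qed
    define w where "w = z (0,0,0)"
    have wfar: "\<forall>m\<in>Mset. 3*\<kappa>/2 \<le> cmod (w - m)" using far z0 unfolding w_def by blast
    have Ofar: "\<forall>m\<in>Mset. 3*\<kappa>/2 \<le> cmod (p - m)" if "p \<in> Orb w" for p using far_orb[OF wfar that] .
    have Ounit: "cmod p = 1" if "p \<in> Orb w" for p using Orb_unit[OF _ that] zu unfolding w_def by blast
    have Osep: "21*\<kappa>/10 \<le> cmod (p - q)" if "p \<in> Orb w" "q \<in> Orb w" "p \<noteq> q" for p q
    proof -
      have "q \<in> {p, rho*p, rho2*p, Rf 1 p, Rf 2 p, Rf 3 p}" using Orb_rel that by blast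
      then have "q = rho*p \<or> q = rho2*p \<or> q = Rf 1 p \<or> q = Rf 2 p \<or> q = Rf 3 p" using that by auto
      moreover have "21*\<kappa>/10 \<le> sqrt 3"
      proof -
        have "1 \<le> sqrt (3::real)" by simp
        then show ?thesis using kc by linarith
      qed
      moreover have "21*\<kappa>/10 \<le> cmod (p - Rf a p)" if "a \<in> {1,2,3}" for a
      proof -
        have "7/5 * (3*\<kappa>/2) \<le> cmod (p - Rf a p)"
          using refl_bound[OF Ounit[OF \<open>p \<in> Orb w\<close>] Ofar[OF \<open>p \<in> Orb w\<close>] _ that] kp by simp
        then show ?thesis by linarith
      qed
      ultimately show ?thesis using rot_dist[OF Ounit[OF \<open>p \<in> Orb w\<close>]] by auto
    qed
    define eB where "eB = 0 + 3 * real B * dB"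
    have eBX: "eB \<le> 120/21 * X" "dB \<le> 40/21 * X"
    proof -
      have "eB = 120/21 * X" unfolding eB_def dB_def X_def using kp by (simp add: field_simps)
      then show "eB \<le> 120/21 * X" by simp
      have "\<Gamma> / \<kappa> \<le> real B * \<Gamma> / \<kappa>" using GB kp by (simp add: divide_right_mono)
      then have "40/21 * (\<Gamma> / \<kappa>) \<le> 40/21 * (real B * \<Gamma> / \<kappa>)" by (intro mult_left_mono) auto
      moreover have "dB = 40/21 * (\<Gamma> / \<kappa>)" unfolding dB_def by simp
      ultimately show "dB \<le> 40/21 * X" unfolding X_def by simp
    qed
    obtain L where L: "\<forall>r\<in>Lambda B. L r \<in> Orb w \<and> cmod (z r - L r) \<le> eB"
      and Le: "\<forall>a\<in>{1,2,3}. \<forall>r. r \<in> Lambda B \<longrightarrow> shift a r \<in> Lambda B \<longrightarrow> L (shift a r) = L r \<or> L (shift a r) = Rf a (L r)"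
    proof -
      have "\<exists>L. (\<forall>r\<in>Lambda B. L r \<in> Orb w \<and> cmod (z r - L r) \<le> 0 + 3 * real B * dB) \<and>
         (\<forall>a\<in>{1,2,3}. \<forall>r. r \<in> Lambda B \<longrightarrow> shift a r \<in> Lambda B \<longrightarrow> L (shift a r) = L r \<or> L (shift a r) = Rf a (L r))"
      proof (rule labels[where sp="21*\<kappa>/10" and rb="(0,0,0)" and pb=w])
        show "finite (Orb w)" by (rule Orb_fin)
        show "2 * (0 + 3 * real B * dB) + dB < 21*\<kappa>/10"
        proof -
          define T where "T = 3 * real B * dB"
          have "T \<le> 120/21 * X" using eBX(1) unfolding eB_def T_def by simp
          then show ?thesis unfolding T_def[symmetric] using eBX(2) Xb kp by (simp add: field_simps)
        qed
        show "cmod (z (0,0,0) - w) \<le> 0" unfolding w_def by simp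
        show "\<And>p a. p \<in> Orb w \<Longrightarrow> a \<in> {1,2,3} \<Longrightarrow> Rf a p \<in> Orb w" by (rule Orb_closed)
        show "\<And>p q. p \<in> Orb w \<Longrightarrow> q \<in> Orb w \<Longrightarrow> p \<noteq> q \<Longrightarrow> 21*\<kappa>/10 \<le> cmod (p - q)" by (rule Osep)
        show "\<And>a r. a \<in> {1,2,3} \<Longrightarrow> r \<in> Lambda B \<Longrightarrow> shift a r \<in> Lambda B \<Longrightarrow>
          cmod (z (shift a r) - z r) \<le> dB \<or> cmod (z (shift a r) - Rf a (z r)) \<le> dB"
          by (rule steps)
        show "(0,0,0) \<in> Lambda B" by (rule z0)
        show "w \<in> Orb w" by (rule Orb_ne)
        show "0 \<le> dB" by (rule dB0)
      qed
      then show ?thesis using that unfolding eB_def by blast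
    qed
    have Lnz: "L r \<noteq> 0" if "r \<in> Lambda B" for r using Ounit L that by force
    have comb_res: "(\<forall>r\<in>Lambda B. L r = L (0,0,0)) \<or>
      (\<exists>a\<in>{1,2,3}. \<exists>j\<in>{1..B}. \<exists>p. Rf a p \<noteq> p \<and> (\<forall>r\<in>Lambda B. coord a r = j - 1 \<longrightarrow> L r = p) \<and>
        (\<forall>r\<in>Lambda B. coord a r = j \<longrightarrow> L r = Rf a p))"
    proof (rule comb[where R=Rf])
      show "\<And>a x. a \<in> {1,2,3} \<Longrightarrow> Rf a (Rf a x) = x" by (rule Rf_inv)
      show "\<And>a r. a \<in> {1,2,3} \<Longrightarrow> r \<in> Lambda B \<Longrightarrow> shift a r \<in> Lambda B \<Longrightarrow>
             L (shift a r) = L r \<or> L (shift a r) = Rf a (L r)" using Le by blast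
      fix a b r assume h: "a \<in> {1,2,3::nat}" "b \<in> {1,2,3::nat}" "a \<noteq> b" "r \<in> Lambda B"
      have "L r \<noteq> 0" using Lnz h(4) by blast
      then show "Rf a (Rf b (L r)) \<noteq> L r \<and> Rf a (Rf b (L r)) \<noteq> Rf b (Rf a (L r))"
        using Rf_comm[OF h(1,2,3)] by blast
    qed
    have Lz: "cmod (z r - L r) \<le> eB" if "r \<in> Lambda B" for r using L that by blast
    have BX: "eB + pi / real s \<le> 11 * X" using eBX ps X0 by linarith
    from comb_res show ?thesis
    proof
      assume const: "\<forall>r\<in>Lambda B. L r = L (0,0,0)"
      define p where "p = L (0,0,0)"
      have pO: "p \<in> Orb w" using L z0 unfolding p_def by blast
      obtain i where i: "i \<in> {1..s}" and gi: "cmod (cis (Arg p) - cis (theta_star t0 s i)) \<le> pi / real s"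
        using grid[OF s1] by blast
      define ts where "ts = theta_star t0 s i"
      have gi': "cmod (p - cis ts) \<le> pi / real s" using gi unfolding ts_def unit_cis_Arg[OF Ounit[OF pO]] .
      have "\<forall>r\<in>Lambda B. near_mod (\<theta> r) ts \<Delta>"
      proof
        fix r assume r: "r \<in> Lambda B"
        have "cmod (z r - cis ts) \<le> cmod (z r - p) + cmod (p - cis ts)"
          using norm_triangle_ineq[of "z r - p" "p - cis ts"] by simp
        also have "\<dots> \<le> 11 * X"
        proof -
          have "cmod (z r - p) \<le> eB" using Lz[OF r] const r unfolding p_def by simp
          then show ?thesis using gi' BX by linarith
        qed
        finally show "near_mod (\<theta> r) ts \<Delta>" using nearI unfolding z_def by blast
      qed
      then have "\<theta> \<in> Bad0 B \<Gamma> \<kappa> \<Delta> ts" using bad by (simp add: Bad0_def)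
      then show ?thesis using i unfolding ts_def by blast
    next
      assume "\<exists>a\<in>{1,2,3}. \<exists>j\<in>{1..B}. \<exists>p. Rf a p \<noteq> p \<and> (\<forall>r\<in>Lambda B. coord a r = j - 1 \<longrightarrow> L r = p) \<and>
        (\<forall>r\<in>Lambda B. coord a r = j \<longrightarrow> L r = Rf a p)"
      then obtain a j p where a: "a \<in> {1,2,3}" and j: "j \<in> {1..B}" and pf: "Rf a p \<noteq> p"
        and P0: "\<forall>r\<in>Lambda B. coord a r = j - 1 \<longrightarrow> L r = p"
        and P1: "\<forall>r\<in>Lambda B. coord a r = j \<longrightarrow> L r = Rf a p" by blast
      define u0 where "u0 = setc a (j - 1) (0,0,0)"
      have u0: "u0 \<in> Lambda B" "coord a u0 = j - 1" using plane0[OF j] unfolding u0_def by auto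
      have pO: "p \<in> Orb w" using L P0 u0 by metis
      obtain i where i: "i \<in> {1..s}" and gi: "cmod (cis (Arg p) - cis (theta_star t0 s i)) \<le> pi / real s"
        using grid[OF s1] by blast
      define ts where "ts = theta_star t0 s i"
      have gi': "cmod (p - cis ts) \<le> pi / real s" using gi unfolding ts_def unit_cis_Arg[OF Ounit[OF pO]] .
      have c1: "\<forall>r\<in>Lambda B. coord a r = j - 1 \<longrightarrow> near_mod (\<theta> r) ts \<Delta>"
      proof (intro ballI impI)
        fix v assume v: "v \<in> Lambda B" "coord a v = j - 1"
        have "cmod (z v - cis ts) \<le> cmod (z v - p) + cmod (p - cis ts)"
          using norm_triangle_ineq[of "z v - p" "p - cis ts"] by simp
        also have "\<dots> \<le> 11 * X"
        proof -
          have "cmod (z v - p) \<le> eB" using Lz[OF v(1)] P0 v by simp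
          then show ?thesis using gi' BX by linarith
        qed
        finally show "near_mod (\<theta> v) ts \<Delta>" using nearI unfolding z_def by blast
      qed
      have c2: "\<forall>r\<in>Lambda B. coord a r = j \<longrightarrow> near_mod (\<theta> r) (2 * phi a - ts) \<Delta>"
      proof (intro ballI impI)
        fix v assume v: "v \<in> Lambda B" "coord a v = j"
        have "cmod (z v - cis (2 * phi a - ts)) = cmod (z v - Rf a (cis ts))" by (simp add: Rf_cis)
        also have "\<dots> \<le> cmod (z v - Rf a p) + cmod (Rf a p - Rf a (cis ts))"
          using norm_triangle_ineq[of "z v - Rf a p" "Rf a p - Rf a (cis ts)"] by simp
        also have "cmod (Rf a p - Rf a (cis ts)) = cmod (p - cis ts)" by (rule Rf_dist)
        moreover have "cmod (z v - Rf a p) \<le> eB" using Lz[OF v(1)] P1 v by simp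
        ultimately have "cmod (z v - cis (2 * phi a - ts)) \<le> 11 * X"
          using gi' BX by linarith
        then show "near_mod (\<theta> v) (2 * phi a - ts) \<Delta>" using nearI unfolding z_def by blast
      qed
      have exc: "\<kappa> \<le> cmod (cis ts - \<mu>)" if \<mu>: "\<mu> \<in> Mset" for \<mu>
      proof -
        have "3*\<kappa>/2 \<le> cmod (p - \<mu>)" using Ofar[OF pO] \<mu> by blast
        also have "cmod (p - \<mu>) \<le> cmod (p - cis ts) + cmod (cis ts - \<mu>)"
          using norm_triangle_ineq[of "p - cis ts" "cis ts - \<mu>"] by simp
        finally show ?thesis using gi' ps Xb kp by linarith
      qed
      have x1: "\<not> near_mod ts (phi a) \<kappa>"
        using farI exc[OF phi_M(1)[OF a]] by blast
      have "\<kappa> \<le> cmod (cis ts - cis (phi a + pi))" using exc[OF phi_M(2)[OF a]] by (simp add: cis_plus_pi)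
      then have x2: "\<not> near_mod ts (phi a + pi) \<kappa>" using farI by blast
      have "\<theta> \<in> Bad_aj B \<Gamma> \<kappa> \<Delta> ts a j" using Bad_ajI[OF x1 x2 c1 c2] .
      then show ?thesis using i a j unfolding ts_def by blast
    qed
  qed
qed


theorem theorem6p4:
  "\<exists>c0::real. c0 > 0 \<and>
     (\<forall>(\<kappa>::real) (\<Gamma>::real) (B::nat) (s::nat) (t0::real) (\<Delta>::real).
        0 < \<kappa> \<longrightarrow> 0 < \<Gamma> \<longrightarrow> 1 \<le> B \<longrightarrow> 1 \<le> s \<longrightarrow>
        \<kappa> \<le> c0 \<longrightarrow> real B * sqrt \<Gamma> \<le> c0 * \<kappa> \<longrightarrow>
        \<Delta> = 12 * real B * \<Gamma> / \<kappa> \<longrightarrow> real s * \<Delta> > 4 * pi \<longrightarrow>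
        Bad_SW B \<Gamma> \<kappa> \<subseteq>
          (\<Union>i\<in>{1..s}. Bad0 B \<Gamma> \<kappa> \<Delta> (theta_star t0 s i) \<union>
             (\<Union>a\<in>{1,2,3}. \<Union>j\<in>{1..B}. Bad_aj B \<Gamma> \<kappa> \<Delta> (theta_star t0 s i) a j)))"
  apply (rule exI[of _ "1/100"])
  apply (intro conjI allI impI subsetI)
   apply simp
  apply (rule main_lemma; assumption)
  done

end
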